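(* Let $N\ge2$, $M\ge1$, $k\ge0$ and let $\psi\in\mathcal H_M$. Then the operators $\mathcal T^k(|\psi\rangle\langle\psi|)$ on $\mathcal H_{M+k}$ and $\mathcal W_k(|\psi\rangle\langle\psi|)$ on $\mathcal H_k$ have the same nonzero eigenvalues, counted with multiplicity.
   Context: For $n\ge0$, $\mathcal H_n=P_n(\mathbb C^N)^{\otimes n}$ is the totally symmetric subspace ($P_n$ the symmetrizing projection, $\mathcal H_0=\mathbb C$). On the bosonic Fock space $\bigoplus_{n}\mathcal H_n$, $a^*(v)\phi=\sqrt{n+1}P_{n+1}(v\otimes\phi)$ for $\phi\in\mathcal H_n$, $a(v)=a^*(v)^*$; with an orthonormal basis $e_1,\dots,e_N$ of $\mathbb C^N$, $a_i=a(e_i)$. $\mathcal T^k(\Gamma)=\frac{(M+k)!}{M!}P_{M+k}(I_{\mathbb C^N}^{\otimes k}\otimes\Gamma)P_{M+k}$ for operators $\Gamma=P_M\Gamma P_M$ on $\mathcal H_M$. $\mathcal W_k(\Gamma)=\frac1{k!}\sum_{i_1,\dots,i_k}\sum_{j_1,\dots,j_k}\mathrm{Tr}_{\mathcal H_M}(\Gamma\,a_{i_1}\cdots a_{i_k}a^*_{j_k}\cdots a^*_{j_1})\,a^*_{i_1}\cdots a^*_{i_k}a_{j_k}\cdots a_{j_1}$ restricted to $\mathcal H_k$. *)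

theory Defs
  imports "Jordan_Normal_Form.Schur_Decomposition" "HOL-Combinatorics.Permutations"
begin

text \<open>The n-fold tensor power of C^N is C^(N^n); the basis vector
 e_{i_1} (x) ... (x) e_{i_n} has index a = sum_j i_j N^(n-j) (first factor is the
 most significant base-N digit).\<close>

definition digit :: "nat \<Rightarrow> nat \<Rightarrow> nat \<Rightarrow> nat \<Rightarrow> nat" where
  "digit N n a j = (a div N ^ (n - 1 - j)) mod N"

definition kron :: "complex mat \<Rightarrow> complex mat \<Rightarrow> complex mat" where
  "kron A B = mat (dim_row A * dim_row B) (dim_col A * dim_col B)
     (\<lambda>(i,j). A $$ (i div dim_row B, j div dim_col B) * B $$ (i mod dim_row B, j mod dim_col B))"

text \<open>Symmetrizing projection P_n = (1/n!) sum_sigma U_sigma on (C^N)^{(x)n}.\<close>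
definition symP :: "nat \<Rightarrow> nat \<Rightarrow> complex mat" where
  "symP N n = mat (N ^ n) (N ^ n) (\<lambda>(a,b).
     of_nat (card {\<sigma>. \<sigma> permutes {..<n} \<and> (\<forall>j<n. digit N n a j = digit N n b (\<sigma> j))})
     / of_nat (fact n))"

text \<open>Creation operator a^*(v) : H_n \<rightarrow> H_(n+1), phi \<mapsto> sqrt(n+1) P_(n+1) (v (x) phi),
  as a matrix on the ambient tensor spaces (composed with P_n, so that it is the
  operator on H_n, extended by 0 on the orthogonal complement).\<close>
definition cre :: "nat \<Rightarrow> nat \<Rightarrow> complex vec \<Rightarrow> complex mat" where
  "cre N n v = complex_of_real (sqrt (real (n + 1))) \<cdot>\<^sub>m
     (symP N (n + 1) * kron (mat_of_cols N [v]) (1\<^sub>m (N ^ n)) * symP N n)"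

definition ann :: "nat \<Rightarrow> nat \<Rightarrow> complex vec \<Rightarrow> complex mat" where
  "ann N n v = mat_adjoint (cre N n v)"

text \<open>crs N n [j_1,...,j_k] = a^*_{j_k} ... a^*_{j_1} : H_n \<rightarrow> H_(n+k).\<close>
fun crs :: "nat \<Rightarrow> nat \<Rightarrow> nat list \<Rightarrow> complex mat" where
  "crs N n [] = 1\<^sub>m (N ^ n)"
| "crs N n (j # js) = crs N (n + 1) js * cre N n (unit_vec N j)"

text \<open>anns N n [i_1,...,i_k] = a_{i_1} ... a_{i_k} : H_(n+k) \<rightarrow> H_n.\<close>
fun anns :: "nat \<Rightarrow> nat \<Rightarrow> nat list \<Rightarrow> complex mat" where
  "anns N n [] = 1\<^sub>m (N ^ n)"
| "anns N n (i # is) = ann N n (unit_vec N i) * anns N (n + 1) is"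

definition mtrace :: "complex mat \<Rightarrow> complex" where
  "mtrace A = (\<Sum>i<dim_row A. A $$ (i, i))"

definition vnorm :: "complex vec \<Rightarrow> real" where
  "vnorm v = sqrt (\<Sum>i<dim_vec v. (cmod (v $ i))\<^sup>2)"

text \<open>An orthonormal basis of H_n (occupation-number basis): for each nondecreasing
  index tuple, the normalized symmetrization of the corresponding product vector.\<close>
definition sym_reps :: "nat \<Rightarrow> nat \<Rightarrow> nat list" where
  "sym_reps N n = filter (\<lambda>a. \<forall>j. j + 1 < n \<longrightarrow> digit N n a j \<le> digit N n a (j + 1)) [0..<N ^ n]"

definition symBasis :: "nat \<Rightarrow> nat \<Rightarrow> complex mat" where
  "symBasis N n = mat_of_cols (N ^ n)
     (map (\<lambda>a. let w = symP N n *\<^sub>v unit_vec (N ^ n) a in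
                 (1 / complex_of_real (vnorm w)) \<cdot>\<^sub>v w) (sym_reps N n))"

text \<open>Matrix of an operator A (leaving H_n invariant) restricted to H_n, in the
  orthonormal basis symBasis N n.\<close>
definition restrictH :: "nat \<Rightarrow> nat \<Rightarrow> complex mat \<Rightarrow> complex mat" where
  "restrictH N n A = mat_adjoint (symBasis N n) * A * symBasis N n"

definition traceH :: "nat \<Rightarrow> nat \<Rightarrow> complex mat \<Rightarrow> complex" where
  "traceH N n A = mtrace (restrictH N n A)"

definition ketbra :: "complex vec \<Rightarrow> complex mat" where
  "ketbra \<psi> = mat (dim_vec \<psi>) (dim_vec \<psi>) (\<lambda>(i,j). \<psi> $ i * cnj (\<psi> $ j))"

definition opT :: "nat \<Rightarrow> nat \<Rightarrow> nat \<Rightarrow> complex mat \<Rightarrow> complex mat" where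
  "opT N M k \<Gamma> = (of_nat (fact (M + k)) / of_nat (fact M)) \<cdot>\<^sub>m
     (symP N (M + k) * kron (1\<^sub>m (N ^ k)) \<Gamma> * symP N (M + k))"

definition idx_lists :: "nat \<Rightarrow> nat \<Rightarrow> nat list set" where
  "idx_lists N k = {xs. length xs = k \<and> set xs \<subseteq> {..<N}}"

definition opW :: "nat \<Rightarrow> nat \<Rightarrow> nat \<Rightarrow> complex mat \<Rightarrow> complex mat" where
  "opW N M k \<Gamma> = mat (N ^ k) (N ^ k) (\<lambda>(a,b). (1 / of_nat (fact k)) *
     (\<Sum>is\<in>idx_lists N k. \<Sum>js\<in>idx_lists N k.
        traceH N M (\<Gamma> * anns N M is * crs N M js) *
        (crs N 0 (rev is) * anns N 0 (rev js)) $$ (a, b)))"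

definition eig_mult :: "complex mat \<Rightarrow> complex \<Rightarrow> nat" where
  "eig_mult A c = order c (char_poly A)"

end

theory Submission
  imports Defs
begin


fun enc :: "nat \<Rightarrow> nat list \<Rightarrow> nat" where
  "enc N [] = 0" | "enc N (x # xs) = x * N ^ length xs + enc N xs"

definition dg :: "nat \<Rightarrow> nat \<Rightarrow> nat \<Rightarrow> nat list" where
  "dg N n a = map (digit N n a) [0..<n]"

lemma enc_lt: "set xs \<subseteq> {..<N} \<Longrightarrow> enc N xs < N ^ length xs"
proof (induction xs)
  case Nil then show ?case by simp
next
  case (Cons x xs)
  then have x: "x + 1 \<le> N" and e: "enc N xs < N ^ length xs" by auto
  have "x * N ^ length xs + enc N xs < x * N ^ length xs + N ^ length xs" using e by simp
  also have "\<dots> = (x + 1) * N ^ length xs" by simp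
  also have "\<dots> \<le> N * N ^ length xs" using x by (intro mult_right_mono) auto
  finally show ?case by simp
qed

lemma enc_append: "enc N (xs @ ys) = enc N xs * N ^ length ys + enc N ys"
  by (induction xs) (auto simp: power_add algebra_simps)

lemma digit_enc:
  assumes "set xs \<subseteq> {..<N}" "j < length xs"
  shows "digit N (length xs) (enc N xs) j = xs ! j"
  using assms
proof (induction xs arbitrary: j)
  case Nil then show ?case by simp
next
  case (Cons x xs)
  let ?l = "length xs"
  have x: "x < N" and e: "enc N xs < N ^ ?l" using Cons.prems enc_lt[of xs N] by auto
  show ?case
  proof (cases j)
    case 0
    have pos: "N ^ ?l \<noteq> 0" using e by linarith
    have "(x * N ^ ?l + enc N xs) div N ^ ?l = x + enc N xs div N ^ ?l"
      using div_mult_self1[OF pos, of "enc N xs" x] by (simp add: add.commute)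
    then have "(x * N ^ ?l + enc N xs) div N ^ ?l = x" using e by simp
    then show ?thesis using 0 x by (simp add: digit_def)
  next
    case (Suc i)
    with Cons.prems have i: "i < ?l" by simp
    have "(x * N ^ ?l + enc N xs) div N ^ (?l - Suc i) = x * N ^ Suc i * N ^ (?l - Suc i) div N ^ (?l - Suc i) + enc N xs div N ^ (?l - Suc i)"
    proof -
      have "Suc i + (?l - Suc i) = ?l" using i by simp
      then have "N ^ ?l = N ^ Suc i * N ^ (?l - Suc i)" by (metis power_add)
      moreover have D: "N ^ (?l - Suc i) \<noteq> 0" using x by simp
      ultimately show ?thesis
        using div_mult_self1[OF D, of "enc N xs" "x * N ^ Suc i"] by (simp add: add.commute mult.assoc)
    qed
    also have "x * N ^ Suc i * N ^ (?l - Suc i) div N ^ (?l - Suc i) = x * N ^ Suc i" using x by simp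
    finally have eq1: "(x * N ^ ?l + enc N xs) div N ^ (?l - Suc i) = x * N ^ Suc i + enc N xs div N ^ (?l - Suc i)" .
    have eq2: "x * N ^ Suc i = (x * N ^ i) * N" by simp
    have "(x * N ^ ?l + enc N xs) div N ^ (?l - Suc i) mod N = (enc N xs div N ^ (?l - Suc i)) mod N"
      unfolding eq1 eq2 by (simp only: mod_mult_self3)
    then show ?thesis using Cons.IH[of i] Cons.prems i Suc by (simp add: digit_def)
  qed
qed

lemma length_dg[simp]: "length (dg N n a) = n" by (simp add: dg_def)

lemma dg_nth[simp]: "j < n \<Longrightarrow> dg N n a ! j = digit N n a j" by (simp add: dg_def)

lemma set_dg: "0 < N \<Longrightarrow> set (dg N n a) \<subseteq> {..<N}" by (auto simp: dg_def digit_def)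

lemma dg_enc: "set xs \<subseteq> {..<N} \<Longrightarrow> dg N (length xs) (enc N xs) = xs"
  by (rule nth_equalityI) (auto simp: digit_enc)

lemma dg_Suc: "dg N (Suc n) a = dg N n (a div N) @ [a mod N]"
proof (rule nth_equalityI)
  show "length (dg N (Suc n) a) = length (dg N n (a div N) @ [a mod N])" by simp
  fix j assume "j < length (dg N (Suc n) a)"
  then have j: "j < Suc n" by simp
  show "dg N (Suc n) a ! j = (dg N n (a div N) @ [a mod N]) ! j"
  proof (cases "j < n")
    case True
    have "N ^ (n - j) = N * N ^ (n - 1 - j)" using True
      by (metis Suc_diff_Suc diff_Suc_1 diff_diff_left plus_1_eq_Suc power_Suc)
    then show ?thesis using True j by (simp add: nth_append digit_def div_mult2_eq)
  next
    case False
    then have "j = n" using j by simp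
    then show ?thesis by (simp add: nth_append digit_def)
  qed
qed

lemma enc_dg: "a < N ^ n \<Longrightarrow> enc N (dg N n a) = a"
proof (induction n arbitrary: a)
  case 0 then show ?case by (simp add: dg_def)
next
  case (Suc n)
  have "a div N < N ^ n" using Suc.prems
    by (metis less_mult_imp_div_less mult.commute power_Suc)
  then have "enc N (dg N n (a div N)) = a div N" by (rule Suc.IH)
  then show ?case by (simp add: dg_Suc enc_append)
qed

lemma idx_lists_enc_bij: "0 < N \<Longrightarrow> bij_betw (enc N) (idx_lists N n) {..<N ^ n}"
proof (rule bij_betw_byWitness[where f' = "dg N n"])
  assume N: "0 < N"
  show "\<forall>a\<in>idx_lists N n. dg N n (enc N a) = a" using dg_enc unfolding idx_lists_def by fastforce
  show "\<forall>a'\<in>{..<N ^ n}. enc N (dg N n a') = a'" using enc_dg by auto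
  show "enc N ` idx_lists N n \<subseteq> {..<N ^ n}" using enc_lt unfolding idx_lists_def by fastforce
  show "dg N n ` {..<N ^ n} \<subseteq> idx_lists N n" using set_dg[OF N] unfolding idx_lists_def by auto
qed

lemma finite_idx_lists: "finite (idx_lists N n)"
proof -
  have "idx_lists N n \<subseteq> {xs. set xs \<subseteq> {..<N} \<and> length xs = n}" unfolding idx_lists_def by auto
  then show ?thesis using finite_lists_length_eq[of "{..<N}" n] finite_subset by blast
qed

lemma sum_idx_lists: "0 < N \<Longrightarrow> (\<Sum>xs\<in>idx_lists N n. f (enc N xs)) = (\<Sum>a<N ^ n. f a)"
  using sum.reindex_bij_betw[OF idx_lists_enc_bij] by blast

lemma sum_mult_split: "(\<Sum>z<a * b. f z) = (\<Sum>x<a. \<Sum>y<b. f (x * b + y)::'a::comm_monoid_add)"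
  for a b :: nat
proof (induction a)
  case 0 then show ?case by simp
next
  case (Suc a)
  have "{..<Suc a * b} = {..<a * b} \<union> {a * b..<a * b + b}" by auto
  moreover have "sum f ({..<a * b} \<union> {a * b..<a * b + b}) = sum f {..<a * b} + sum f {a * b..<a * b + b}"
    by (rule sum.union_disjoint) auto
  ultimately have "(\<Sum>z<Suc a * b. f z) = (\<Sum>z<a * b. f z) + (\<Sum>z\<in>{a * b..<a * b + b}. f z)"
    by simp
  also have "(\<Sum>z\<in>{a * b..<a * b + b}. f z) = (\<Sum>y<b. f (a * b + y))"
    by (rule sum.reindex_bij_witness[of _ "\<lambda>y. a * b + y" "\<lambda>z. z - a * b"]) auto
  finally show ?case using Suc by simp
qed

lemma dg_split:
  assumes "0 < N" "x < N ^ m" "y < N ^ n"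
  shows "dg N (m + n) (x * N ^ n + y) = dg N m x @ dg N n y"
proof -
  have "x * N ^ n + y = enc N (dg N m x @ dg N n y)"
    using assms by (simp add: enc_append enc_dg)
  moreover have "set (dg N m x @ dg N n y) \<subseteq> {..<N}" using set_dg[OF assms(1)] by auto
  ultimately show ?thesis using dg_enc[of "dg N m x @ dg N n y" N] by simp
qed

lemma mult_add_lt: "x < (a::nat) \<Longrightarrow> y < b \<Longrightarrow> x * b + y < a * b"
proof -
  assume "x < a" "y < b"
  then have "x * b + y < x * b + b" by simp
  also have "\<dots> = Suc x * b" by simp
  also have "\<dots> \<le> a * b" using \<open>x < a\<close> by (intro mult_right_mono) auto
  finally show ?thesis .
qed



lemma mult_entry:
  assumes "i < dim_row A" "j < dim_col B" "dim_col A = dim_row B"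
  shows "(A * B) $$ (i, j) = (\<Sum>k<dim_row B. A $$ (i, k) * B $$ (k, j))"
  using assms by (simp add: index_mult_mat scalar_prod_def atLeast0LessThan)

lemma adjoint_entry:
  assumes "i < dim_col A" "j < dim_row A"
  shows "mat_adjoint A $$ (i, j) = cnj (A $$ (j, i))"
  using assms by (simp add: mat_adjoint_def mat_of_rows_def conjugate_vec_def)

lemma adjoint_dims[simp]: "dim_row (mat_adjoint A) = dim_col A" "dim_col (mat_adjoint A) = dim_row A"
  by (simp_all add: mat_adjoint_def)

lemma adjoint_eq: "mat_adjoint A = mat (dim_col A) (dim_row A) (\<lambda>(i,j). cnj (A $$ (j, i)))"
  by (rule eq_matI) (auto simp: adjoint_entry)

definition cnt :: "nat list \<Rightarrow> nat list \<Rightarrow> nat" where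
  "cnt xs ys = card {\<sigma>. \<sigma> permutes {..<length ys} \<and> xs = permute_list \<sigma> ys}"

definition pv :: "nat list \<Rightarrow> nat list \<Rightarrow> complex" where
  "pv xs ys = of_nat (cnt xs ys) / of_nat (fact (length ys))"

lemma symP_carrier[simp]: "symP N n \<in> carrier_mat (N ^ n) (N ^ n)"
  by (simp add: symP_def)

lemma symP_dims[simp]: "dim_row (symP N n) = N ^ n" "dim_col (symP N n) = N ^ n"
  by (simp_all add: symP_def)

lemma symP_entry:
  assumes "a < N ^ n" "b < N ^ n"
  shows "symP N n $$ (a, b) = pv (dg N n a) (dg N n b)"
proof -
  have "{\<sigma>. \<sigma> permutes {..<n} \<and> (\<forall>j<n. digit N n a j = digit N n b (\<sigma> j))}
      = {\<sigma>. \<sigma> permutes {..<length (dg N n b)} \<and> dg N n a = permute_list \<sigma> (dg N n b)}"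
  proof (intro Collect_cong iffI conjI; elim conjE)
    fix \<sigma> assume p: "\<sigma> permutes {..<n}" and h: "\<forall>j<n. digit N n a j = digit N n b (\<sigma> j)"
    show "\<sigma> permutes {..<length (dg N n b)}" using p by simp
    show "dg N n a = permute_list \<sigma> (dg N n b)"
    proof (rule nth_equalityI)
      show "length (dg N n a) = length (permute_list \<sigma> (dg N n b))" by simp
      fix i assume i: "i < length (dg N n a)"
      then have i': "i < n" by simp
      have si: "\<sigma> i < n" using permutes_in_image[OF p] i' by simp
      show "dg N n a ! i = permute_list \<sigma> (dg N n b) ! i"
        using i' si p h by (simp add: permute_list_nth)
    qed
  next
    fix \<sigma> assume p: "\<sigma> permutes {..<length (dg N n b)}" and h: "dg N n a = permute_list \<sigma> (dg N n b)"
    show "\<sigma> permutes {..<n}" using p by simp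
    show "\<forall>j<n. digit N n a j = digit N n b (\<sigma> j)"
    proof (intro allI impI)
      fix j assume j: "j < n"
      have "dg N n a ! j = permute_list \<sigma> (dg N n b) ! j" using h by simp
      then show "digit N n a j = digit N n b (\<sigma> j)" using j p permutes_in_image[OF p]
        by (simp add: permute_list_nth)
    qed
  qed
  then show ?thesis using assms by (simp add: symP_def pv_def cnt_def)
qed

lemma cnt_mset_right:
  assumes "mset ys = mset ys'"
  shows "cnt xs ys = cnt xs ys'"
proof -
  have len: "length ys' = length ys" using mset_eq_length[OF assms] by simp
  obtain \<tau> where t: "\<tau> permutes {..<length ys}" "permute_list \<tau> ys = ys'"
    using mset_eq_permutation[OF assms[symmetric]] by blast
  let ?S = "{..<length ys}"
  let ?A = "{\<sigma>. \<sigma> permutes ?S \<and> xs = permute_list \<sigma> ys'}"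
  let ?B = "{\<sigma>. \<sigma> permutes ?S \<and> xs = permute_list \<sigma> ys}"
  have "bij_betw (\<lambda>\<sigma>. \<tau> \<circ> \<sigma>) ?A ?B"
  proof (rule bij_betw_byWitness[where f' = "\<lambda>\<rho>. Hilbert_Choice.inv \<tau> \<circ> \<rho>"])
    show "\<forall>a\<in>?A. Hilbert_Choice.inv \<tau> \<circ> (\<tau> \<circ> a) = a"
      using permutes_inv_o(2)[OF t(1)] by (auto simp: o_assoc)
    show "\<forall>a'\<in>?B. \<tau> \<circ> (Hilbert_Choice.inv \<tau> \<circ> a') = a'"
      using permutes_inv_o(1)[OF t(1)] by (auto simp: o_assoc)
    show "(\<lambda>\<sigma>. \<tau> \<circ> \<sigma>) ` ?A \<subseteq> ?B"
    proof
      fix r assume "r \<in> (\<lambda>\<sigma>. \<tau> \<circ> \<sigma>) ` ?A"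
      then obtain \<sigma> where p: "\<sigma> permutes ?S" and h: "xs = permute_list \<sigma> ys'" and r: "r = \<tau> \<circ> \<sigma>" by auto
      have "\<tau> \<circ> \<sigma> permutes ?S" using permutes_compose[OF p t(1)] .
      moreover have "xs = permute_list (\<tau> \<circ> \<sigma>) ys" using h t(2) permute_list_compose[of \<sigma> ys \<tau>] p by simp
      ultimately show "r \<in> ?B" using r by simp
    qed
    show "(\<lambda>\<rho>. Hilbert_Choice.inv \<tau> \<circ> \<rho>) ` ?B \<subseteq> ?A"
    proof
      fix r assume "r \<in> (\<lambda>\<rho>. Hilbert_Choice.inv \<tau> \<circ> \<rho>) ` ?B"
      then obtain \<rho> where p: "\<rho> permutes ?S" and h: "xs = permute_list \<rho> ys" and r: "r = Hilbert_Choice.inv \<tau> \<circ> \<rho>" by auto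
      have pi: "Hilbert_Choice.inv \<tau> permutes ?S" using permutes_inv[OF t(1)] .
      have "Hilbert_Choice.inv \<tau> \<circ> \<rho> permutes ?S" using permutes_compose[OF p pi] .
      moreover have "permute_list (Hilbert_Choice.inv \<tau> \<circ> \<rho>) ys' = permute_list \<rho> (permute_list (Hilbert_Choice.inv \<tau>) ys')"
        using permute_list_compose[of \<rho> ys' "Hilbert_Choice.inv \<tau>"] p len by simp
      moreover have "permute_list (Hilbert_Choice.inv \<tau>) ys' = ys"
        using t permute_list_compose[of "Hilbert_Choice.inv \<tau>" ys \<tau>] pi permutes_inv_o(1)[OF t(1)] by simp
      ultimately show "r \<in> ?A" using h r by simp
    qed
  qed
  then have "card ?A = card ?B" by (rule bij_betw_same_card)
  then show ?thesis unfolding cnt_def using len by simp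
qed

lemma cnt_sym:
  assumes "length xs = length ys"
  shows "cnt xs ys = cnt ys xs"
proof -
  let ?S = "{..<length ys}"
  let ?A = "{\<sigma>. \<sigma> permutes ?S \<and> xs = permute_list \<sigma> ys}"
  let ?B = "{\<sigma>. \<sigma> permutes ?S \<and> ys = permute_list \<sigma> xs}"
  have key: "\<And>us vs \<sigma>. length us = length ys \<Longrightarrow> \<sigma> permutes ?S \<Longrightarrow> us = permute_list \<sigma> vs \<Longrightarrow> length vs = length ys
      \<Longrightarrow> vs = permute_list (Hilbert_Choice.inv \<sigma>) us"
  proof -
    fix us vs \<sigma> assume l: "length us = length ys" and p: "\<sigma> permutes ?S" and h: "us = permute_list \<sigma> vs"
      and l2: "length vs = length ys"
    have pi: "Hilbert_Choice.inv \<sigma> permutes ?S" using permutes_inv[OF p] .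
    have "permute_list (Hilbert_Choice.inv \<sigma>) us = permute_list (\<sigma> \<circ> Hilbert_Choice.inv \<sigma>) vs"
      using h permute_list_compose[of "Hilbert_Choice.inv \<sigma>" vs \<sigma>] pi l2 by simp
    also have "\<dots> = vs" using permutes_inv_o(1)[OF p] by simp
    finally show "vs = permute_list (Hilbert_Choice.inv \<sigma>) us" by simp
  qed
  have "bij_betw Hilbert_Choice.inv ?A ?B"
  proof (rule bij_betw_byWitness[where f' = Hilbert_Choice.inv])
    show "\<forall>a\<in>?A. Hilbert_Choice.inv (Hilbert_Choice.inv a) = a" using permutes_inv_inv by blast
    show "\<forall>a\<in>?B. Hilbert_Choice.inv (Hilbert_Choice.inv a) = a" using permutes_inv_inv by blast
    show "Hilbert_Choice.inv ` ?A \<subseteq> ?B"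
    proof
      fix r assume "r \<in> Hilbert_Choice.inv ` ?A"
      then obtain \<sigma> where p: "\<sigma> permutes ?S" and h: "xs = permute_list \<sigma> ys" and r: "r = Hilbert_Choice.inv \<sigma>" by auto
      have "ys = permute_list (Hilbert_Choice.inv \<sigma>) xs" by (rule key[OF assms p h refl])
      then show "r \<in> ?B" using r permutes_inv[OF p] by simp
    qed
    show "Hilbert_Choice.inv ` ?B \<subseteq> ?A"
    proof
      fix r assume "r \<in> Hilbert_Choice.inv ` ?B"
      then obtain \<sigma> where p: "\<sigma> permutes ?S" and h: "ys = permute_list \<sigma> xs" and r: "r = Hilbert_Choice.inv \<sigma>" by auto
      have "xs = permute_list (Hilbert_Choice.inv \<sigma>) ys" by (rule key[OF refl p h assms])
      then show "r \<in> ?A" using r permutes_inv[OF p] by simp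
    qed
  qed
  then have "card ?A = card ?B" by (rule bij_betw_same_card)
  then show ?thesis unfolding cnt_def using assms by simp
qed

lemma pv_mset_right: "mset ys = mset ys' \<Longrightarrow> pv xs ys = pv xs ys'"
  unfolding pv_def using cnt_mset_right mset_eq_length by metis

lemma pv_sym: "length xs = length ys \<Longrightarrow> pv xs ys = pv ys xs"
  unfolding pv_def using cnt_sym by metis

lemma pv_mset_left: "length xs = length ys \<Longrightarrow> mset xs = mset xs' \<Longrightarrow> pv xs ys = pv xs' ys"
  by (metis pv_sym pv_mset_right mset_eq_length)

lemma pv_cnj[simp]: "cnj (pv xs ys) = pv xs ys"
  by (simp add: pv_def)

lemma pv_sum:
  "pv xs ys = (\<Sum>\<sigma>\<in>{\<sigma>. \<sigma> permutes {..<length ys}}. if xs = permute_list \<sigma> ys then 1 else 0) / of_nat (fact (length ys))"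
proof -
  have fin: "finite {\<sigma>. \<sigma> permutes {..<length ys}}" by (rule finite_permutations) simp
  have "cnt xs ys = (\<Sum>\<sigma>\<in>{\<sigma>. \<sigma> permutes {..<length ys}}. if xs = permute_list \<sigma> ys then 1 else 0)"
    unfolding cnt_def using sum.inter_filter[OF fin, of "\<lambda>_. 1::nat" "\<lambda>\<sigma>. xs = permute_list \<sigma> ys"]
    by (simp add: Collect_conj_eq[symmetric] conj_commute)
  then show ?thesis unfolding pv_def by (simp add: of_nat_sum if_distrib cong: if_cong)
qed

lemma sum_dg_delta:
  assumes N: "0 < N" and L: "set L \<subseteq> {..<N}" "length L = q"
  shows "(\<Sum>y<N ^ q. f y * (if dg N q y = L then 1 else 0)) = (f (enc N L) :: complex)"
proof -
  have "\<And>y. y < N ^ q \<Longrightarrow> (dg N q y = L) = (y = enc N L)"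
    using enc_dg dg_enc L by fastforce
  then have "(\<Sum>y<N ^ q. f y * (if dg N q y = L then 1 else 0)) = (\<Sum>y<N ^ q. if y = enc N L then f y else 0)"
    by (intro sum.cong) auto
  also have "\<dots> = f (enc N L)" using enc_lt[OF L(1)] L(2) by simp
  finally show ?thesis .
qed

lemma absorb_gen:
  assumes N: "0 < N" and c: "c < N ^ q"
    and inv: "\<And>us vs. mset us = mset vs \<Longrightarrow> g us = g vs"
  shows "(\<Sum>y<N ^ q. g (dg N q y) * symP N q $$ (y, c)) = (g (dg N q c) :: complex)"
proof -
  let ?Perm = "{\<sigma>. \<sigma> permutes {..<q}}"
  have fin: "finite ?Perm" by (rule finite_permutations) simp
  have "(\<Sum>y<N ^ q. g (dg N q y) * symP N q $$ (y, c))
      = (\<Sum>y<N ^ q. g (dg N q y) * ((\<Sum>\<sigma>\<in>?Perm. if dg N q y = permute_list \<sigma> (dg N q c) then 1 else 0) / of_nat (fact q)))"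
    using c by (intro sum.cong) (auto simp: symP_entry pv_sum)
  also have "\<dots> = (\<Sum>\<sigma>\<in>?Perm. \<Sum>y<N ^ q. g (dg N q y) * (if dg N q y = permute_list \<sigma> (dg N q c) then 1 else 0)) / of_nat (fact q)"
    by (simp add: sum_divide_distrib sum_distrib_left sum.swap[of _ ?Perm])
  also have "\<dots> = (\<Sum>\<sigma>\<in>?Perm. g (dg N q c)) / of_nat (fact q)"
  proof -
    have "\<And>\<sigma>. \<sigma> \<in> ?Perm \<Longrightarrow> (\<Sum>y<N ^ q. g (dg N q y) * (if dg N q y = permute_list \<sigma> (dg N q c) then 1 else 0)) = g (dg N q c)"
    proof -
      fix \<sigma> assume s: "\<sigma> \<in> ?Perm"
      then have s': "\<sigma> permutes {..<length (dg N q c)}" by simp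
      have setL: "set (permute_list \<sigma> (dg N q c)) \<subseteq> {..<N}" using set_dg[OF N] s' by simp
      have "(\<Sum>y<N ^ q. g (dg N q y) * (if dg N q y = permute_list \<sigma> (dg N q c) then 1 else 0))
         = g (dg N q (enc N (permute_list \<sigma> (dg N q c))))"
        by (rule sum_dg_delta[OF N setL]) simp
      also have "\<dots> = g (permute_list \<sigma> (dg N q c))" using dg_enc[OF setL] by simp
      also have "\<dots> = g (dg N q c)" by (rule inv) (rule mset_permute_list[OF s'])
      finally show "?thesis \<sigma>" .
    qed
    then show ?thesis by (intro arg_cong2[where f = "(/)"] sum.cong) auto
  qed
  also have "\<dots> = g (dg N q c)" using card_permutations[of "{..<q}" q] by simp
  finally show ?thesis .
qed

lemma absorb_gen_left:
  assumes N: "0 < N" and c: "c < N ^ q"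
    and inv: "\<And>us vs. mset us = mset vs \<Longrightarrow> g us = g vs"
  shows "(\<Sum>y<N ^ q. symP N q $$ (c, y) * g (dg N q y)) = (g (dg N q c) :: complex)"
proof -
  have "\<And>y. y < N ^ q \<Longrightarrow> symP N q $$ (c, y) * g (dg N q y) = g (dg N q y) * symP N q $$ (y, c)"
    using c by (simp add: symP_entry pv_sym)
  then have "(\<Sum>y<N ^ q. symP N q $$ (c, y) * g (dg N q y)) = (\<Sum>y<N ^ q. g (dg N q y) * symP N q $$ (y, c))"
    by (intro sum.cong) auto
  also have "\<dots> = g (dg N q c)" by (rule absorb_gen[OF assms])
  finally show ?thesis .
qed

lemma symP_sym: "a < N ^ n \<Longrightarrow> b < N ^ n \<Longrightarrow> symP N n $$ (a, b) = symP N n $$ (b, a)"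
  by (simp add: symP_entry pv_sym)

lemma symP_adjoint: "mat_adjoint (symP N n) = symP N n"
  by (rule eq_matI) (auto simp: adjoint_entry symP_entry pv_sym)

lemma symP_idem: assumes N: "0 < N" shows "symP N n * symP N n = symP N n"
proof (rule eq_matI)
  fix a c assume a: "a < dim_row (symP N n)" and c: "c < dim_col (symP N n)"
  then have a': "a < N ^ n" and c': "c < N ^ n" by auto
  have "(symP N n * symP N n) $$ (a, c) = (\<Sum>y<N ^ n. pv (dg N n a) (dg N n y) * symP N n $$ (y, c))"
    using a' c' by (subst mult_entry) (auto intro!: sum.cong simp: symP_entry)
  also have "\<dots> = pv (dg N n a) (dg N n c)"
    by (rule absorb_gen[OF N c', of "\<lambda>us. pv (dg N n a) us"]) (rule pv_mset_right)
  finally show "(symP N n * symP N n) $$ (a, c) = symP N n $$ (a, c)" using a' c' by (simp add: symP_entry)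
qed auto



definition prv :: "nat list \<Rightarrow> nat list \<Rightarrow> real" where
  "prv xs ys = real (cnt xs ys) / fact (length ys)"

lemma pv_prv: "pv xs ys = complex_of_real (prv xs ys)"
  by (simp add: pv_def prv_def)

lemma prv_sym: "length xs = length ys \<Longrightarrow> prv xs ys = prv ys xs"
  using pv_sym[of xs ys] by (simp add: pv_prv)

lemma cnt_zero: "mset xs \<noteq> mset ys \<Longrightarrow> cnt xs ys = 0"
proof -
  assume h: "mset xs \<noteq> mset ys"
  have "{\<sigma>. \<sigma> permutes {..<length ys} \<and> xs = permute_list \<sigma> ys} = {}"
    using h by auto
  then show ?thesis by (metis cnt_def card.empty)
qed

lemma pv_zero: "mset xs \<noteq> mset ys \<Longrightarrow> pv xs ys = 0"
  by (simp add: pv_def cnt_zero)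

lemma cnt_diag_pos: "0 < cnt ys ys"
proof -
  have fin: "finite {\<sigma>. \<sigma> permutes {..<length ys} \<and> ys = permute_list \<sigma> ys}"
    using finite_permutations[of "{..<length ys}"] by (auto intro: finite_subset)
  have "id \<in> {\<sigma>. \<sigma> permutes {..<length ys} \<and> ys = permute_list \<sigma> ys}"
    by (simp add: permutes_id)
  then show ?thesis unfolding cnt_def using fin card_gt_0_iff by blast
qed

lemma prv_diag_pos: "0 < prv ys ys"
  using cnt_diag_pos[of ys] by (simp add: prv_def)

lemma symP_real: "a < N ^ n \<Longrightarrow> b < N ^ n \<Longrightarrow> symP N n $$ (a, b) = complex_of_real (prv (dg N n a) (dg N n b))"
  by (simp add: symP_entry pv_prv)

lemma sum_sq_col:
  assumes N: "0 < N" and r: "r < N ^ n"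
  shows "(\<Sum>x<N ^ n. (prv (dg N n x) (dg N n r))\<^sup>2) = prv (dg N n r) (dg N n r)"
proof -
  have "(symP N n * symP N n) $$ (r, r) = symP N n $$ (r, r)" using symP_idem[OF N] by simp
  moreover have "(symP N n * symP N n) $$ (r, r) = (\<Sum>x<N ^ n. symP N n $$ (r, x) * symP N n $$ (x, r))"
    using r by (subst mult_entry) auto
  ultimately have "(\<Sum>x<N ^ n. symP N n $$ (r, x) * symP N n $$ (x, r)) = symP N n $$ (r, r)"
    by simp
  moreover have "\<And>x. x < N ^ n \<Longrightarrow> symP N n $$ (r, x) * symP N n $$ (x, r) = complex_of_real ((prv (dg N n x) (dg N n r))\<^sup>2)"
    using r by (simp add: symP_real power2_eq_square prv_sym[of "dg N n r" "dg N n x" for x])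
  ultimately have "complex_of_real (\<Sum>x<N ^ n. (prv (dg N n x) (dg N n r))\<^sup>2) = complex_of_real (prv (dg N n r) (dg N n r))"
    using r by (simp add: symP_real)
  then show ?thesis by (simp only: of_real_eq_iff)
qed

lemma vnorm_col:
  assumes N: "0 < N" and r: "r < N ^ n"
  shows "vnorm (symP N n *\<^sub>v unit_vec (N ^ n) r) = sqrt (prv (dg N n r) (dg N n r))"
proof -
  have "\<And>x. x < N ^ n \<Longrightarrow> (symP N n *\<^sub>v unit_vec (N ^ n) r) $ x = complex_of_real (prv (dg N n x) (dg N n r))"
    using r by (simp add: scalar_prod_right_unit symP_real)
  then have "(\<Sum>i<N ^ n. (cmod ((symP N n *\<^sub>v unit_vec (N ^ n) r) $ i))\<^sup>2) = (\<Sum>x<N ^ n. (prv (dg N n x) (dg N n r))\<^sup>2)"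
    by (intro sum.cong) auto
  then show ?thesis unfolding vnorm_def using sum_sq_col[OF N r] by simp
qed

lemma sym_reps_iff: "r \<in> set (sym_reps N n) \<longleftrightarrow> r < N ^ n \<and> sorted (dg N n r)"
  unfolding sym_reps_def sorted_iff_nth_Suc by auto

lemma distinct_sym_reps: "distinct (sym_reps N n)"
  by (simp add: sym_reps_def)

lemma symBasis_dims[simp]: "dim_row (symBasis N n) = N ^ n" "dim_col (symBasis N n) = length (sym_reps N n)"
  by (simp_all add: symBasis_def)

lemma symBasis_entry:
  assumes N: "0 < N" and a: "a < N ^ n" and i: "i < length (sym_reps N n)"
  shows "symBasis N n $$ (a, i) = complex_of_real (prv (dg N n a) (dg N n (sym_reps N n ! i)) / sqrt (prv (dg N n (sym_reps N n ! i)) (dg N n (sym_reps N n ! i))))"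
proof -
  let ?r = "sym_reps N n ! i"
  have r: "?r < N ^ n" using i sym_reps_iff nth_mem by blast
  show ?thesis using a i r
    by (simp add: symBasis_def mat_of_cols_index Let_def vnorm_col[OF N r] scalar_prod_right_unit symP_real)
qed

lemma unique_rep:
  assumes N: "0 < N" and a: "a < N ^ n"
  shows "\<exists>!r. r \<in> set (sym_reps N n) \<and> mset (dg N n r) = mset (dg N n a)"
proof
  let ?r = "enc N (sort (dg N n a))"
  have st: "set (sort (dg N n a)) \<subseteq> {..<N}" using set_dg[OF N] by simp
  have lt: "?r < N ^ n" using enc_lt[OF st] by simp
  have dgr: "dg N n ?r = sort (dg N n a)" using dg_enc[OF st] by simp
  show "?r \<in> set (sym_reps N n) \<and> mset (dg N n ?r) = mset (dg N n a)"
    using lt dgr by (simp add: sym_reps_iff)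
  fix r assume h: "r \<in> set (sym_reps N n) \<and> mset (dg N n r) = mset (dg N n a)"
  then have "sort (dg N n a) = dg N n r" using properties_for_sort[of "dg N n r" "dg N n a"] sym_reps_iff by blast
  then have "enc N (sort (dg N n a)) = r" using enc_dg h sym_reps_iff by metis
  then show "r = ?r" by simp
qed

lemma symBasis_proj:
  assumes N: "0 < N"
  shows "symBasis N n * mat_adjoint (symBasis N n) = symP N n"
proof (rule eq_matI)
  fix a b assume a: "a < dim_row (symP N n)" and b: "b < dim_col (symP N n)"
  then have a: "a < N ^ n" and b: "b < N ^ n" by auto
  let ?R = "sym_reps N n"
  let ?d = "length ?R"
  let ?p = "\<lambda>x y. prv (dg N n x) (dg N n y)"
  obtain ra where ra: "ra \<in> set ?R" "mset (dg N n ra) = mset (dg N n a)"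
    and un: "\<And>r. r \<in> set ?R \<Longrightarrow> mset (dg N n r) = mset (dg N n a) \<Longrightarrow> r = ra"
    using unique_rep[OF N a] by blast
  have ralt: "ra < N ^ n" using ra sym_reps_iff by blast
  obtain ia where ia: "ia < ?d" "?R ! ia = ra" using ra(1) by (metis in_set_conv_nth)
  have tm: "\<And>i. i < ?d \<Longrightarrow> symBasis N n $$ (a, i) * cnj (symBasis N n $$ (b, i))
      = (if i = ia then complex_of_real (?p a b) else 0)"
  proof -
    fix i assume i: "i < ?d"
    let ?r = "?R ! i"
    have r: "?r < N ^ n" "?r \<in> set ?R" using i sym_reps_iff nth_mem by blast+
    have pos: "0 < ?p ?r ?r" by (rule prv_diag_pos)
    have sq: "complex_of_real (sqrt (?p ?r ?r)) * complex_of_real (sqrt (?p ?r ?r)) = complex_of_real (?p ?r ?r)"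
      using pos by (simp only: of_real_mult[symmetric] real_sqrt_mult_self abs_of_pos)
    have val: "symBasis N n $$ (a, i) * cnj (symBasis N n $$ (b, i))
        = complex_of_real (?p a ?r * ?p b ?r / ?p ?r ?r)"
      using pos sq by (simp add: symBasis_entry[OF N a i] symBasis_entry[OF N b i])
    show "?thesis i"
    proof (cases "i = ia")
      case True
      then have rr: "?r = ra" using ia by simp
      have l1: "?p a ra = ?p ra ra"
        using pv_mset_left[of "dg N n a" "dg N n ra" "dg N n ra"] ra(2) by (simp add: pv_prv)
      have l2: "?p b ra = ?p ra b" using pv_sym[of "dg N n b" "dg N n ra"] by (simp add: pv_prv)
      have l3: "?p ra b = ?p a b"
        using pv_mset_left[of "dg N n ra" "dg N n b" "dg N n a"] ra(2) by (simp add: pv_prv)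
      show ?thesis using val True rr l1 l2 l3 pos by simp
    next
      case False
      then have "?r \<noteq> ra" using ia i distinct_sym_reps nth_eq_iff_index_eq by metis
      then have "mset (dg N n ?r) \<noteq> mset (dg N n a)" using un r(2) by blast
      then have "?p a ?r = 0" using pv_zero[of "dg N n a" "dg N n ?r"] by (metis pv_prv of_real_eq_0_iff)
      then show ?thesis using val False by simp
    qed
  qed
  have "(symBasis N n * mat_adjoint (symBasis N n)) $$ (a, b) = (\<Sum>i<?d. symBasis N n $$ (a, i) * cnj (symBasis N n $$ (b, i)))"
    using a b by (subst mult_entry) (auto simp: adjoint_entry)
  also have "\<dots> = (\<Sum>i<?d. if i = ia then complex_of_real (?p a b) else 0)" using tm by simp
  also have "\<dots> = complex_of_real (?p a b)" using ia by simp
  finally show "(symBasis N n * mat_adjoint (symBasis N n)) $$ (a, b) = symP N n $$ (a, b)"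
    using a b by (simp add: symP_real)
qed auto



lemma symP_mset_right:
  assumes "a < N ^ p" "x < N ^ p" "x' < N ^ p" "mset (dg N p x) = mset (dg N p x')"
  shows "symP N p $$ (a, x) = symP N p $$ (a, x')"
  using assms by (simp add: symP_entry) (rule pv_mset_right, simp)

lemma dg_pref:
  assumes N: "0 < N" and xs: "set xs \<subseteq> {..<N}" and y: "y < N ^ q"
  shows "dg N (length xs + q) (enc N xs * N ^ q + y) = xs @ dg N q y"
  using dg_split[OF N enc_lt[OF xs] y] dg_enc[OF xs] by simp

lemma enc_pref_lt:
  assumes xs: "set xs \<subseteq> {..<N}" and y: "y < N ^ q"
  shows "enc N xs * N ^ q + y < N ^ (length xs + q)"
  using mult_add_lt[OF enc_lt[OF xs] y] by (simp add: power_add)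

lemma absR_pref:
  assumes N: "0 < N" and a: "a < N ^ p" and p: "p = length xs + q" and xs: "set xs \<subseteq> {..<N}"
    and c: "c < N ^ q"
  shows "(\<Sum>y<N ^ q. symP N p $$ (a, enc N xs * N ^ q + y) * symP N q $$ (y, c)) = symP N p $$ (a, enc N xs * N ^ q + c)"
proof -
  let ?g = "\<lambda>us. pv (dg N p a) (xs @ us)"
  have "\<And>y. y < N ^ q \<Longrightarrow> symP N p $$ (a, enc N xs * N ^ q + y) = ?g (dg N q y)"
    using a p by (simp add: symP_entry enc_pref_lt[OF xs] dg_pref[OF N xs])
  then have "(\<Sum>y<N ^ q. symP N p $$ (a, enc N xs * N ^ q + y) * symP N q $$ (y, c))
      = (\<Sum>y<N ^ q. ?g (dg N q y) * symP N q $$ (y, c))" by (intro sum.cong) auto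
  also have "\<dots> = ?g (dg N q c)"
    by (rule absorb_gen[OF N c]) (rule pv_mset_right, simp)
  also have "\<dots> = symP N p $$ (a, enc N xs * N ^ q + c)"
    using a p c by (simp add: symP_entry enc_pref_lt[OF xs] dg_pref[OF N xs])
  finally show ?thesis .
qed

lemma dg_suf:
  assumes N: "0 < N" and y: "y < N ^ q" and z: "z < N ^ m"
  shows "dg N (m + q) (y * N ^ m + z) = dg N q y @ dg N m z"
  using dg_split[OF N y z] by (simp add: add.commute)

lemma suf_lt: "y < (N::nat) ^ q \<Longrightarrow> z < N ^ m \<Longrightarrow> y * N ^ m + z < N ^ (m + q)"
  using mult_add_lt[of y "N ^ q" z "N ^ m"] by (simp add: power_add mult.commute)

lemma absR_suf:
  assumes N: "0 < N" and a: "a < N ^ (m + q)" and z: "z < N ^ m" and c: "c < N ^ q"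
  shows "(\<Sum>y<N ^ q. symP N (m + q) $$ (a, y * N ^ m + z) * symP N q $$ (y, c)) = symP N (m + q) $$ (a, c * N ^ m + z)"
proof -
  let ?g = "\<lambda>us. pv (dg N (m + q) a) (us @ dg N m z)"
  have "\<And>y. y < N ^ q \<Longrightarrow> symP N (m + q) $$ (a, y * N ^ m + z) = ?g (dg N q y)"
    using a z by (simp add: symP_entry suf_lt dg_suf[OF N])
  then have "(\<Sum>y<N ^ q. symP N (m + q) $$ (a, y * N ^ m + z) * symP N q $$ (y, c))
      = (\<Sum>y<N ^ q. ?g (dg N q y) * symP N q $$ (y, c))" by (intro sum.cong) auto
  also have "\<dots> = ?g (dg N q c)"
    by (rule absorb_gen[OF N c]) (rule pv_mset_right, simp)
  also have "\<dots> = symP N (m + q) $$ (a, c * N ^ m + z)"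
    using a z c by (simp add: symP_entry suf_lt dg_suf[OF N])
  finally show ?thesis .
qed

lemma idem_entry:
  assumes N: "0 < N" and a: "a < N ^ p" and b: "b < N ^ p"
  shows "(\<Sum>y<N ^ p. symP N p $$ (a, y) * symP N p $$ (y, b)) = symP N p $$ (a, b)"
proof -
  have "(symP N p * symP N p) $$ (a, b) = (\<Sum>y<N ^ p. symP N p $$ (a, y) * symP N p $$ (y, b))"
    using a b by (subst mult_entry) auto
  then show ?thesis using symP_idem[OF N] by simp
qed

definition creM :: "nat \<Rightarrow> nat \<Rightarrow> nat \<Rightarrow> complex mat" where
  "creM N n j = mat (N ^ Suc n) (N ^ n) (\<lambda>(a, b). symP N (Suc n) $$ (a, j * N ^ n + b))"

lemma creM_carrier[simp]: "creM N n j \<in> carrier_mat (N ^ Suc n) (N ^ n)"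
  by (simp add: creM_def)

lemma kron_cre_entry:
  assumes z: "z < N * N ^ n" and y: "y < N ^ n" and j: "j < N"
  shows "kron (mat_of_cols N [unit_vec N j]) (1\<^sub>m (N ^ n)) $$ (z, y)
    = (if z = j * N ^ n + y then 1 else 0)"
proof -
  have pos: "0 < N ^ n" using y by linarith
  have zd: "z div N ^ n < N" using z by (simp add: less_mult_imp_div_less)
  have zm: "z mod N ^ n < N ^ n" using pos by simp
  have "(z = j * N ^ n + y) = (z div N ^ n = j \<and> z mod N ^ n = y)"
  proof
    assume h: "z = j * N ^ n + y"
    have "z div N ^ n = j" unfolding h using y pos by simp
    moreover have "z mod N ^ n = y" unfolding h using y by simp
    ultimately show "z div N ^ n = j \<and> z mod N ^ n = y" by simp
  next
    assume "z div N ^ n = j \<and> z mod N ^ n = y"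
    then show "z = j * N ^ n + y" using div_mult_mod_eq[of z "N ^ n"] by simp
  qed
  then show ?thesis using z y zd zm j by (simp add: kron_def mat_of_cols_index unit_vec_def)
qed

lemma creM_P:
  assumes N: "0 < N" and j: "j < N"
  shows "creM N n j * symP N n = creM N n j"
  proof (rule eq_matI)
    fix a b assume a: "a < dim_row (creM N n j)" and b: "b < dim_col (creM N n j)"
    then have a: "a < N ^ Suc n" and b: "b < N ^ n" by (simp_all add: creM_def)
    have "(creM N n j * symP N n) $$ (a, b) = (\<Sum>y<N ^ n. symP N (Suc n) $$ (a, enc N [j] * N ^ n + y) * symP N n $$ (y, b))"
      using a b by (subst mult_entry) (auto simp: creM_def)
    also have "\<dots> = symP N (Suc n) $$ (a, enc N [j] * N ^ n + b)"
      by (rule absR_pref[OF N a _ _ b]) (use j in auto)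
    finally show "(creM N n j * symP N n) $$ (a, b) = creM N n j $$ (a, b)"
      using a b by (simp add: creM_def)
  qed (auto simp: creM_def)

lemma cre_eq:
  assumes N: "0 < N" and j: "j < N"
  shows "cre N n (unit_vec N j) = complex_of_real (sqrt (real (n + 1))) \<cdot>\<^sub>m creM N n j"
proof -
  let ?K = "kron (mat_of_cols N [unit_vec N j]) (1\<^sub>m (N ^ n))"
  have Kd: "dim_row ?K = N * N ^ n" "dim_col ?K = N ^ n" by (simp_all add: kron_def)
  have PK: "symP N (n + 1) * ?K = creM N n j"
  proof (rule eq_matI)
    fix a y assume a: "a < dim_row (creM N n j)" and y: "y < dim_col (creM N n j)"
    then have a: "a < N ^ Suc n" and y: "y < N ^ n" by (simp_all add: creM_def)
    have "(symP N (n + 1) * ?K) $$ (a, y) = (\<Sum>z<N * N ^ n. symP N (Suc n) $$ (a, z) * ?K $$ (z, y))"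
      using a y Kd by (subst mult_entry) auto
    also have "\<dots> = (\<Sum>z<N * N ^ n. if z = j * N ^ n + y then symP N (Suc n) $$ (a, z) else 0)"
      using y j by (intro sum.cong) (auto simp: kron_cre_entry)
    also have "\<dots> = symP N (Suc n) $$ (a, j * N ^ n + y)"
      using mult_add_lt[OF j y] by simp
    finally show "(symP N (n + 1) * ?K) $$ (a, y) = creM N n j $$ (a, y)"
      using a y by (simp add: creM_def)
  qed (auto simp: creM_def Kd)
  have CP: "creM N n j * symP N n = creM N n j" by (rule creM_P[OF N j])
  show ?thesis unfolding cre_def using PK CP by simp
qed

lemma cre_carrier[simp]: "cre N n v \<in> carrier_mat (N ^ Suc n) (N ^ n)"
  unfolding carrier_mat_def by (simp add: cre_def)

lemma P_creM: assumes N: "0 < N" and j: "j < N" shows "symP N (Suc n) * creM N n j = creM N n j"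
proof (rule eq_matI)
  fix a b assume a: "a < dim_row (creM N n j)" and b: "b < dim_col (creM N n j)"
  then have a: "a < N ^ Suc n" and b: "b < N ^ n" by (simp_all add: creM_def)
  show "(symP N (Suc n) * creM N n j) $$ (a, b) = creM N n j $$ (a, b)"
  proof -
    have lt: "j * N ^ n + b < N ^ Suc n" using mult_add_lt[OF j b] by simp
    have "(symP N (Suc n) * creM N n j) $$ (a, b) = (\<Sum>y<N ^ Suc n. symP N (Suc n) $$ (a, y) * symP N (Suc n) $$ (y, j * N ^ n + b))"
      using a b by (subst mult_entry) (auto simp: creM_def intro!: sum.cong)
    also have "\<dots> = symP N (Suc n) $$ (a, j * N ^ n + b)" by (rule idem_entry[OF N a lt])
    finally show ?thesis using a b by (simp add: creM_def)
  qed
qed (auto simp: creM_def)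


definition cf :: "nat \<Rightarrow> nat \<Rightarrow> complex" where
  "cf n k = complex_of_real (sqrt (fact (n + k) / fact n))"

definition Fm :: "nat \<Rightarrow> nat \<Rightarrow> nat list \<Rightarrow> complex mat" where
  "Fm N n js = mat (N ^ (n + length js)) (N ^ n)
     (\<lambda>(a, b). cf n (length js) * symP N (n + length js) $$ (a, enc N js * N ^ n + b))"

lemma crs_carrier: "crs N n js \<in> carrier_mat (N ^ (n + length js)) (N ^ n)"
proof (induction js arbitrary: n)
  case Nil then show ?case by simp
next
  case (Cons j js)
  have "crs N (n + 1) js \<in> carrier_mat (N ^ (n + 1 + length js)) (N ^ (n + 1))" by (rule Cons.IH)
  moreover have "cre N n (unit_vec N j) \<in> carrier_mat (N ^ (n + 1)) (N ^ n)" using cre_carrier[of N n] by simp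
  ultimately show ?case by (simp add: algebra_simps)
qed

lemma cf_step: "complex_of_real (sqrt (real (n + 1))) * cf (Suc n) k = cf n (Suc k)"
proof -
  have "sqrt (real (n + 1)) * sqrt (fact (Suc n + k) / fact (Suc n)) = sqrt (real (n + 1) * (fact (Suc n + k) / fact (Suc n)))"
    by (rule real_sqrt_mult[symmetric])
  also have "real (n + 1) * (fact (Suc n + k) / fact (Suc n)) = fact (n + Suc k) / fact n"
  proof -
    have e1: "(fact (Suc n) :: real) = real (n + 1) * fact n" by (simp add: fact_Suc)
    have e2: "Suc n + k = n + Suc k" by simp
    have hl: "\<And>c x y :: real. c \<noteq> 0 \<Longrightarrow> c * (x / (c * y)) = x / y" by simp
    show ?thesis unfolding e1 e2 by (rule hl) simp
  qed
  finally show ?thesis unfolding cf_def by (simp flip: of_real_mult)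
qed

lemma crs_P:
  assumes N: "0 < N"
  shows "set js \<subseteq> {..<N} \<Longrightarrow> crs N n js * symP N n = Fm N n js"
proof (induction js arbitrary: n)
  case Nil
  show ?case
  proof (rule eq_matI)
    fix a b assume "a < dim_row (Fm N n [])" "b < dim_col (Fm N n [])"
    then show "(crs N n [] * symP N n) $$ (a, b) = Fm N n [] $$ (a, b)"
      by (simp add: Fm_def cf_def)
  qed (auto simp: Fm_def)
next
  case (Cons j js)
  then have j: "j < N" and js: "set js \<subseteq> {..<N}" by auto
  let ?s = "complex_of_real (sqrt (real (n + 1)))"
  let ?C = "crs N (Suc n) js"
  have C: "?C \<in> carrier_mat (N ^ (Suc n + length js)) (N ^ Suc n)" using crs_carrier[of N "Suc n" js] by simp
  have cM: "creM N n j \<in> carrier_mat (N ^ Suc n) (N ^ n)" by (rule creM_carrier)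
  have P1: "symP N (Suc n) \<in> carrier_mat (N ^ Suc n) (N ^ Suc n)" by (rule symP_carrier)
  have P0: "symP N n \<in> carrier_mat (N ^ n) (N ^ n)" by simp
  have "crs N n (j # js) * symP N n = (?C * (?s \<cdot>\<^sub>m creM N n j)) * symP N n"
    using cre_eq[OF N j] by simp
  also have "\<dots> = ?s \<cdot>\<^sub>m (?C * (creM N n j * symP N n))"
  proof -
    have "?C * (?s \<cdot>\<^sub>m creM N n j) = ?s \<cdot>\<^sub>m (?C * creM N n j)" by (rule mult_smult_distrib[OF C cM])
    moreover have "(?s \<cdot>\<^sub>m (?C * creM N n j)) * symP N n = ?s \<cdot>\<^sub>m ((?C * creM N n j) * symP N n)"
      by (rule mult_smult_assoc_mat[OF mult_carrier_mat[OF C cM] P0])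
    ultimately show ?thesis using assoc_mult_mat[OF C cM P0] by simp
  qed
  also have "creM N n j * symP N n = symP N (Suc n) * creM N n j" using creM_P[OF N j] P_creM[OF N j] by simp
  also have "?C * (symP N (Suc n) * creM N n j) = (?C * symP N (Suc n)) * creM N n j"
    by (rule assoc_mult_mat[OF C P1 cM, symmetric])
  also have "?C * symP N (Suc n) = Fm N (Suc n) js" using Cons.IH[OF js] by simp
  finally have eq: "crs N n (j # js) * symP N n = ?s \<cdot>\<^sub>m (Fm N (Suc n) js * creM N n j)" .
  show ?case unfolding eq
  proof (rule eq_matI)
    fix a b assume "a < dim_row (Fm N n (j # js))" "b < dim_col (Fm N n (j # js))"
    then have a: "a < N ^ (Suc n + length js)" and b: "b < N ^ n" by (simp_all add: Fm_def)
    have jb: "j * N ^ n + b < N ^ Suc n" using mult_add_lt[OF j b] by simp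
    have "(Fm N (Suc n) js * creM N n j) $$ (a, b)
        = (\<Sum>y<N ^ Suc n. (cf (Suc n) (length js) * symP N (Suc n + length js) $$ (a, enc N js * N ^ Suc n + y)) * symP N (Suc n) $$ (y, j * N ^ n + b))"
      using a b by (subst mult_entry) (auto simp: Fm_def creM_def intro!: sum.cong)
    also have "\<dots> = cf (Suc n) (length js) * (\<Sum>y<N ^ Suc n. symP N (Suc n + length js) $$ (a, enc N js * N ^ Suc n + y) * symP N (Suc n) $$ (y, j * N ^ n + b))"
      by (simp add: sum_distrib_left mult.assoc)
    also have "(\<Sum>y<N ^ Suc n. symP N (Suc n + length js) $$ (a, enc N js * N ^ Suc n + y) * symP N (Suc n) $$ (y, j * N ^ n + b))
        = symP N (Suc n + length js) $$ (a, enc N js * N ^ Suc n + (j * N ^ n + b))"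
      by (rule absR_pref[OF N a _ js jb]) simp
    also have "symP N (Suc n + length js) $$ (a, enc N js * N ^ Suc n + (j * N ^ n + b))
        = symP N (Suc n + length js) $$ (a, enc N (j # js) * N ^ n + b)"
    proof (rule symP_mset_right[OF a])
      have jjs: "set (j # js) \<subseteq> {..<N}" using j js by simp
      show "enc N js * N ^ Suc n + (j * N ^ n + b) < N ^ (Suc n + length js)"
        using enc_pref_lt[OF js jb] by (simp add: add.commute)
      show "enc N (j # js) * N ^ n + b < N ^ (Suc n + length js)"
        using enc_pref_lt[OF jjs b] by (simp add: add.commute)
      have d1: "dg N (Suc n + length js) (enc N js * N ^ Suc n + (j * N ^ n + b)) = js @ dg N (Suc n) (j * N ^ n + b)"
        using dg_pref[OF N js jb] by (simp add: add.commute)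
      have d2: "dg N (Suc n) (j * N ^ n + b) = j # dg N n b"
        using dg_pref[OF N _ b, of "[j]"] j by simp
      have d3: "dg N (Suc n + length js) (enc N (j # js) * N ^ n + b) = (j # js) @ dg N n b"
        using dg_pref[OF N jjs b] by (simp add: add.commute)
      show "mset (dg N (Suc n + length js) (enc N js * N ^ Suc n + (j * N ^ n + b)))
          = mset (dg N (Suc n + length js) (enc N (j # js) * N ^ n + b))"
        unfolding d1 d2 d3 by simp
    qed
    finally show "(?s \<cdot>\<^sub>m (Fm N (Suc n) js * creM N n j)) $$ (a, b) = Fm N n (j # js) $$ (a, b)"
      using a b cf_step[of n "length js"] by (simp add: Fm_def creM_def mult.assoc[symmetric])
  qed (auto simp: Fm_def creM_def)
qed



lemma adjoint_mult:
  fixes A B :: "complex mat"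
  assumes A: "A \<in> carrier_mat n m" and B: "B \<in> carrier_mat m p"
  shows "mat_adjoint (A * B) = mat_adjoint B * mat_adjoint A"
proof (rule eq_matI)
  fix i j assume i: "i < dim_row (mat_adjoint B * mat_adjoint A)" and j: "j < dim_col (mat_adjoint B * mat_adjoint A)"
  then have i: "i < p" and j: "j < n" using A B by auto
  have e: "(A * B) $$ (j, i) = (\<Sum>k<m. A $$ (j, k) * B $$ (k, i))"
    using A B i j by (subst mult_entry) auto
  have "mat_adjoint (A * B) $$ (i, j) = cnj ((A * B) $$ (j, i))"
    using A B i j by (intro adjoint_entry) auto
  also have "\<dots> = cnj (\<Sum>k<m. A $$ (j, k) * B $$ (k, i))" using e by simp
  also have "\<dots> = (\<Sum>k<m. cnj (B $$ (k, i)) * cnj (A $$ (j, k)))"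
    by (simp add: mult.commute)
  also have "\<dots> = (mat_adjoint B * mat_adjoint A) $$ (i, j)"
    using A B i j by (subst mult_entry) (auto simp: adjoint_entry)
  finally show "mat_adjoint (A * B) $$ (i, j) = (mat_adjoint B * mat_adjoint A) $$ (i, j)" .
qed (use A B in auto)

lemma adjoint_one[simp]: "mat_adjoint (1\<^sub>m n :: complex mat) = 1\<^sub>m n"
  by (rule eq_matI) (auto simp: adjoint_entry)

lemma adjoint_adjoint[simp]: "mat_adjoint (mat_adjoint (A :: complex mat)) = A"
  by (rule eq_matI) (auto simp: adjoint_entry)

lemma adjoint_carrier[simp]: "A \<in> carrier_mat n m \<Longrightarrow> mat_adjoint A \<in> carrier_mat m n"
  by auto

lemma anns_eq: "anns N n is = mat_adjoint (crs N n is)"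
proof (induction "is" arbitrary: n)
  case Nil then show ?case by simp
next
  case (Cons i "is")
  have C: "crs N (n + 1) is \<in> carrier_mat (N ^ (n + 1 + length is)) (N ^ (n + 1))" by (rule crs_carrier)
  have c: "cre N n (unit_vec N i) \<in> carrier_mat (N ^ (n + 1)) (N ^ n)" using cre_carrier[of N n] by simp
  show ?case using Cons.IH adjoint_mult[OF C c] by (simp add: ann_def)
qed

definition Qm :: "nat \<Rightarrow> nat \<Rightarrow> nat \<Rightarrow> complex vec \<Rightarrow> complex mat" where
  "Qm N M k \<psi> = mat (N ^ (M + k)) (N ^ k)
     (\<lambda>(a, x). cf M k * (\<Sum>z<N ^ M. symP N (M + k) $$ (a, x * N ^ M + z) * \<psi> $ z))"

lemma Qm_carrier[simp]: "Qm N M k \<psi> \<in> carrier_mat (N ^ (M + k)) (N ^ k)"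
  by (simp add: Qm_def)

lemma crs_psi:
  assumes N: "0 < N" and js: "set js \<subseteq> {..<N}" and k: "length js = k"
    and psi: "\<psi> \<in> carrier_vec (N ^ M)" and Ppsi: "symP N M *\<^sub>v \<psi> = \<psi>" and a: "a < N ^ (M + k)"
  shows "(crs N M js *\<^sub>v \<psi>) $ a = Qm N M k \<psi> $$ (a, enc N js)"
proof -
  have C: "crs N M js \<in> carrier_mat (N ^ (M + length js)) (N ^ M)" by (rule crs_carrier)
  have "crs N M js *\<^sub>v \<psi> = crs N M js *\<^sub>v (symP N M *\<^sub>v \<psi>)" using Ppsi by simp
  also have "\<dots> = (crs N M js * symP N M) *\<^sub>v \<psi>"
    by (rule assoc_mult_mat_vec[symmetric, OF C symP_carrier psi])
  also have "\<dots> = Fm N M js *\<^sub>v \<psi>" using crs_P[OF N js] by simp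
  finally have eq: "crs N M js *\<^sub>v \<psi> = Fm N M js *\<^sub>v \<psi>" .
  have ek: "enc N js < N ^ k" using enc_lt[OF js] k by simp
  have "(Fm N M js *\<^sub>v \<psi>) $ a = (\<Sum>z<N ^ M. Fm N M js $$ (a, z) * \<psi> $ z)"
    using a k psi by (simp add: Fm_def scalar_prod_def atLeast0LessThan)
  also have "\<dots> = (\<Sum>z<N ^ M. cf M k * (symP N (M + k) $$ (a, enc N js * N ^ M + z) * \<psi> $ z))"
    using a k by (intro sum.cong) (auto simp: Fm_def)
  also have "\<dots> = Qm N M k \<psi> $$ (a, enc N js)"
    using a ek by (simp add: Qm_def sum_distrib_left)
  finally show ?thesis using eq by simp
qed

lemma mtrace_conj:
  assumes X: "X \<in> carrier_mat r r" and S: "S \<in> carrier_mat r d"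
  shows "mtrace (mat_adjoint S * X * S) = (\<Sum>a<r. \<Sum>b<r. X $$ (a, b) * (S * mat_adjoint S) $$ (b, a))"
proof -
  have "mtrace (mat_adjoint S * X * S) = (\<Sum>i<d. (mat_adjoint S * X * S) $$ (i, i))"
    using X S by (simp add: mtrace_def)
  also have "\<dots> = (\<Sum>i<d. \<Sum>b<r. (\<Sum>a<r. cnj (S $$ (a, i)) * X $$ (a, b)) * S $$ (b, i))"
  proof (intro sum.cong refl)
    fix i assume i: "i \<in> {..<d}"
    have "(mat_adjoint S * X * S) $$ (i, i) = (\<Sum>b<r. (mat_adjoint S * X) $$ (i, b) * S $$ (b, i))"
      using X S i by (subst mult_entry) auto
    also have "\<dots> = (\<Sum>b<r. (\<Sum>a<r. cnj (S $$ (a, i)) * X $$ (a, b)) * S $$ (b, i))"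
      using X S i by (intro sum.cong refl) (subst mult_entry, auto simp: adjoint_entry)
    finally show "(mat_adjoint S * X * S) $$ (i, i) = (\<Sum>b<r. (\<Sum>a<r. cnj (S $$ (a, i)) * X $$ (a, b)) * S $$ (b, i))" .
  qed
  also have "\<dots> = (\<Sum>i<d. \<Sum>b<r. \<Sum>a<r. cnj (S $$ (a, i)) * X $$ (a, b) * S $$ (b, i))"
    by (simp add: sum_distrib_right)
  also have "\<dots> = (\<Sum>i<d. \<Sum>a<r. \<Sum>b<r. cnj (S $$ (a, i)) * X $$ (a, b) * S $$ (b, i))"
    by (rule sum.cong[OF refl], rule sum.swap)
  also have "\<dots> = (\<Sum>a<r. \<Sum>i<d. \<Sum>b<r. cnj (S $$ (a, i)) * X $$ (a, b) * S $$ (b, i))"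
    by (rule sum.swap)
  also have "\<dots> = (\<Sum>a<r. \<Sum>b<r. \<Sum>i<d. cnj (S $$ (a, i)) * X $$ (a, b) * S $$ (b, i))"
    by (rule sum.cong[OF refl], rule sum.swap)
  also have "\<dots> = (\<Sum>a<r. \<Sum>b<r. X $$ (a, b) * (\<Sum>i<d. S $$ (b, i) * cnj (S $$ (a, i))))"
    by (simp add: sum_distrib_left mult_ac)
  also have "\<dots> = (\<Sum>a<r. \<Sum>b<r. X $$ (a, b) * (S * mat_adjoint S) $$ (b, a))"
    using S by (intro sum.cong refl) (subst mult_entry, auto simp: adjoint_entry)
  finally show ?thesis .
qed

lemma traceH_ketbra:
  assumes N: "0 < N" and psi: "\<psi> \<in> carrier_vec (N ^ n)" and Ppsi: "symP N n *\<^sub>v \<psi> = \<psi>"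
    and Y: "Y \<in> carrier_mat (N ^ n) (N ^ n)"
  shows "traceH N n (ketbra \<psi> * Y) = (\<Sum>b<N ^ n. \<Sum>c<N ^ n. cnj (\<psi> $ c) * Y $$ (c, b) * \<psi> $ b)"
proof -
  let ?r = "N ^ n"
  have dv: "dim_vec \<psi> = ?r" using psi carrier_vecD by blast
  have K: "ketbra \<psi> \<in> carrier_mat ?r ?r" unfolding ketbra_def by (rule carrier_matI) (simp_all add: dv)
  have Ke: "\<And>a c. a < ?r \<Longrightarrow> c < ?r \<Longrightarrow> ketbra \<psi> $$ (a, c) = \<psi> $ a * cnj (\<psi> $ c)"
    unfolding ketbra_def by (simp add: dv)
  have X: "ketbra \<psi> * Y \<in> carrier_mat ?r ?r" by (rule mult_carrier_mat[OF K Y])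
  have S: "symBasis N n \<in> carrier_mat ?r (length (sym_reps N n))" by (rule carrier_matI) simp_all
  have Pv: "\<And>b. b < ?r \<Longrightarrow> (\<Sum>a<?r. symP N n $$ (b, a) * \<psi> $ a) = \<psi> $ b"
  proof -
    fix b assume b: "b < ?r"
    have "(symP N n *\<^sub>v \<psi>) $ b = row (symP N n) b \<bullet> \<psi>" using b by simp
    also have "\<dots> = (\<Sum>a<?r. symP N n $$ (b, a) * \<psi> $ a)"
      unfolding scalar_prod_def dv using b by (intro sum.cong) auto
    finally have "(symP N n *\<^sub>v \<psi>) $ b = (\<Sum>a<?r. symP N n $$ (b, a) * \<psi> $ a)" .
    then show "(\<Sum>a<?r. symP N n $$ (b, a) * \<psi> $ a) = \<psi> $ b" unfolding Ppsi by simp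
  qed
  have "traceH N n (ketbra \<psi> * Y) = (\<Sum>a<?r. \<Sum>b<?r. (ketbra \<psi> * Y) $$ (a, b) * symP N n $$ (b, a))"
    unfolding traceH_def restrictH_def mtrace_conj[OF X S] symBasis_proj[OF N] ..
  also have "\<dots> = (\<Sum>a<?r. \<Sum>b<?r. (\<Sum>c<?r. \<psi> $ a * cnj (\<psi> $ c) * Y $$ (c, b)) * symP N n $$ (b, a))"
  proof (rule sum.cong[OF refl], rule sum.cong[OF refl])
    fix a b assume a: "a \<in> {..<?r}" and b: "b \<in> {..<?r}"
    have "(ketbra \<psi> * Y) $$ (a, b) = (\<Sum>c<?r. ketbra \<psi> $$ (a, c) * Y $$ (c, b))"
      using K Y a b by (subst mult_entry) auto
    also have "\<dots> = (\<Sum>c<?r. \<psi> $ a * cnj (\<psi> $ c) * Y $$ (c, b))"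
      using a Ke by (intro sum.cong) auto
    finally show "(ketbra \<psi> * Y) $$ (a, b) * symP N n $$ (b, a) = (\<Sum>c<?r. \<psi> $ a * cnj (\<psi> $ c) * Y $$ (c, b)) * symP N n $$ (b, a)"
      by simp
  qed
  also have "\<dots> = (\<Sum>a<?r. \<Sum>b<?r. \<Sum>c<?r. \<psi> $ a * cnj (\<psi> $ c) * Y $$ (c, b) * symP N n $$ (b, a))"
    by (simp add: sum_distrib_right)
  also have "\<dots> = (\<Sum>b<?r. \<Sum>a<?r. \<Sum>c<?r. \<psi> $ a * cnj (\<psi> $ c) * Y $$ (c, b) * symP N n $$ (b, a))"
    by (rule sum.swap)
  also have "\<dots> = (\<Sum>b<?r. \<Sum>c<?r. \<Sum>a<?r. \<psi> $ a * cnj (\<psi> $ c) * Y $$ (c, b) * symP N n $$ (b, a))"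
    by (rule sum.cong[OF refl], rule sum.swap)
  also have "\<dots> = (\<Sum>b<?r. \<Sum>c<?r. cnj (\<psi> $ c) * Y $$ (c, b) * (\<Sum>a<?r. symP N n $$ (b, a) * \<psi> $ a))"
    by (simp add: sum_distrib_left mult_ac)
  also have "\<dots> = (\<Sum>b<?r. \<Sum>c<?r. cnj (\<psi> $ c) * Y $$ (c, b) * \<psi> $ b)"
    by (rule sum.cong[OF refl]) (simp add: Pv)
  finally show ?thesis .
qed



lemma mv_entry:
  assumes "A \<in> carrier_mat r c" "v \<in> carrier_vec c" "i < r"
  shows "(A *\<^sub>v v) $ i = (\<Sum>k<c. A $$ (i, k) * v $ k)"
  using assms by (auto simp: scalar_prod_def atLeast0LessThan intro!: sum.cong)

lemma trace_term:
  assumes N: "0 < N" and psi: "\<psi> \<in> carrier_vec (N ^ M)" and Ppsi: "symP N M *\<^sub>v \<psi> = \<psi>"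
    and il: "il \<in> idx_lists N k" and js: "js \<in> idx_lists N k"
  shows "traceH N M (ketbra \<psi> * anns N M il * crs N M js)
    = (\<Sum>e<N ^ (M + k). cnj (Qm N M k \<psi> $$ (e, enc N il)) * Qm N M k \<psi> $$ (e, enc N js))"
proof -
  let ?r = "N ^ M" and ?R = "N ^ (M + k)"
  have li: "length il = k" "set il \<subseteq> {..<N}" using il by (auto simp: idx_lists_def)
  have lj: "length js = k" "set js \<subseteq> {..<N}" using js by (auto simp: idx_lists_def)
  have C: "crs N M il \<in> carrier_mat ?R ?r" using crs_carrier[of N M il] li by simp
  have D: "crs N M js \<in> carrier_mat ?R ?r" using crs_carrier[of N M js] lj by simp
  have dv: "dim_vec \<psi> = ?r" using psi carrier_vecD by blast
  have K: "ketbra \<psi> \<in> carrier_mat ?r ?r" unfolding ketbra_def by (rule carrier_matI) (simp_all add: dv)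
  have A: "anns N M il \<in> carrier_mat ?r ?R" unfolding anns_eq using C by simp
  have Y: "anns N M il * crs N M js \<in> carrier_mat ?r ?r" using A D by simp
  have "ketbra \<psi> * anns N M il * crs N M js = ketbra \<psi> * (anns N M il * crs N M js)"
    by (rule assoc_mult_mat[OF K A D])
  then have "traceH N M (ketbra \<psi> * anns N M il * crs N M js)
     = (\<Sum>b<?r. \<Sum>c<?r. cnj (\<psi> $ c) * (anns N M il * crs N M js) $$ (c, b) * \<psi> $ b)"
    using traceH_ketbra[OF N psi Ppsi Y] by simp
  also have "\<dots> = (\<Sum>b<?r. \<Sum>c<?r. \<Sum>e<?R. cnj (\<psi> $ c) * cnj (crs N M il $$ (e, c)) * crs N M js $$ (e, b) * \<psi> $ b)"
  proof (rule sum.cong[OF refl], rule sum.cong[OF refl])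
    fix b c assume b: "b \<in> {..<?r}" and c: "c \<in> {..<?r}"
    have "(anns N M il * crs N M js) $$ (c, b) = (\<Sum>e<?R. cnj (crs N M il $$ (e, c)) * crs N M js $$ (e, b))"
      unfolding anns_eq using C D b c by (subst mult_entry) (auto simp: adjoint_entry)
    then show "cnj (\<psi> $ c) * (anns N M il * crs N M js) $$ (c, b) * \<psi> $ b
        = (\<Sum>e<?R. cnj (\<psi> $ c) * cnj (crs N M il $$ (e, c)) * crs N M js $$ (e, b) * \<psi> $ b)"
      by (simp add: sum_distrib_left sum_distrib_right mult_ac)
  qed
  also have "\<dots> = (\<Sum>b<?r. \<Sum>e<?R. \<Sum>c<?r. cnj (\<psi> $ c) * cnj (crs N M il $$ (e, c)) * crs N M js $$ (e, b) * \<psi> $ b)"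
    by (rule sum.cong[OF refl], rule sum.swap)
  also have "\<dots> = (\<Sum>e<?R. \<Sum>b<?r. \<Sum>c<?r. cnj (\<psi> $ c) * cnj (crs N M il $$ (e, c)) * crs N M js $$ (e, b) * \<psi> $ b)"
    by (rule sum.swap)
  also have "\<dots> = (\<Sum>e<?R. \<Sum>c<?r. \<Sum>b<?r. cnj (\<psi> $ c) * cnj (crs N M il $$ (e, c)) * crs N M js $$ (e, b) * \<psi> $ b)"
    by (rule sum.cong[OF refl], rule sum.swap)
  also have "\<dots> = (\<Sum>e<?R. cnj (\<Sum>c<?r. crs N M il $$ (e, c) * \<psi> $ c) * (\<Sum>b<?r. crs N M js $$ (e, b) * \<psi> $ b))"
    by (simp add: sum_distrib_left sum_distrib_right mult_ac)
  also have "\<dots> = (\<Sum>e<?R. cnj (Qm N M k \<psi> $$ (e, enc N il)) * Qm N M k \<psi> $$ (e, enc N js))"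
  proof (rule sum.cong[OF refl])
    fix e assume e: "e \<in> {..<?R}"
    have "(\<Sum>c<?r. crs N M il $$ (e, c) * \<psi> $ c) = (crs N M il *\<^sub>v \<psi>) $ e"
      using mv_entry[OF C psi] e by simp
    also have "\<dots> = Qm N M k \<psi> $$ (e, enc N il)" using crs_psi[OF N li(2) li(1) psi Ppsi] e by simp
    finally have 1: "(\<Sum>c<?r. crs N M il $$ (e, c) * \<psi> $ c) = Qm N M k \<psi> $$ (e, enc N il)" .
    have "(\<Sum>c<?r. crs N M js $$ (e, c) * \<psi> $ c) = (crs N M js *\<^sub>v \<psi>) $ e"
      using mv_entry[OF D psi] e by simp
    also have "\<dots> = Qm N M k \<psi> $$ (e, enc N js)" using crs_psi[OF N lj(2) lj(1) psi Ppsi] e by simp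
    finally have 2: "(\<Sum>c<?r. crs N M js $$ (e, c) * \<psi> $ c) = Qm N M k \<psi> $$ (e, enc N js)" .
    show "cnj (\<Sum>c<?r. crs N M il $$ (e, c) * \<psi> $ c) * (\<Sum>b<?r. crs N M js $$ (e, b) * \<psi> $ b)
        = cnj (Qm N M k \<psi> $$ (e, enc N il)) * Qm N M k \<psi> $$ (e, enc N js)"
      using 1 2 by simp
  qed
  finally show ?thesis .
qed

lemma symP0: "symP N 0 = 1\<^sub>m 1"
proof -
  have "{\<sigma>. \<sigma> permutes ({} :: nat set)} = {id}" by (auto simp: permutes_empty)
  then show ?thesis by (intro eq_matI) (auto simp: symP_def)
qed

lemma crs0:
  assumes N: "0 < N" and l: "set l \<subseteq> {..<N}"
  shows "crs N 0 l = Fm N 0 l"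
proof -
  have C: "crs N 0 l \<in> carrier_mat (N ^ (0 + length l)) 1" using crs_carrier[of N 0 l] by simp
  have "crs N 0 l = crs N 0 l * symP N 0" using C by (simp add: symP0)
  also have "\<dots> = Fm N 0 l" by (rule crs_P[OF N l])
  finally show ?thesis .
qed

lemma op0_entry:
  assumes N: "0 < N" and il: "il \<in> idx_lists N k" and js: "js \<in> idx_lists N k"
    and a: "a < N ^ k" and b: "b < N ^ k"
  shows "(crs N 0 (rev il) * anns N 0 (rev js)) $$ (a, b)
     = of_nat (fact k) * symP N k $$ (a, enc N il) * symP N k $$ (enc N js, b)"
proof -
  have li: "length il = k" "set il \<subseteq> {..<N}" using il by (auto simp: idx_lists_def)
  have lj: "length js = k" "set js \<subseteq> {..<N}" using js by (auto simp: idx_lists_def)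
  have ri: "set (rev il) \<subseteq> {..<N}" "length (rev il) = k" using li by auto
  have rj: "set (rev js) \<subseteq> {..<N}" "length (rev js) = k" using lj by auto
  have ei: "enc N il < N ^ k" "enc N (rev il) < N ^ k" using enc_lt[OF li(2)] enc_lt[OF ri(1)] li(1) by auto
  have ej: "enc N js < N ^ k" "enc N (rev js) < N ^ k" using enc_lt[OF lj(2)] enc_lt[OF rj(1)] lj(1) by auto
  have F: "\<And>l x. set l \<subseteq> {..<N} \<Longrightarrow> length l = k \<Longrightarrow> x < N ^ k \<Longrightarrow> crs N 0 l $$ (x, 0) = cf 0 k * symP N k $$ (x, enc N l)"
    using N by (simp add: crs0 Fm_def)
  have Cd: "\<And>l. length l = k \<Longrightarrow> crs N 0 l \<in> carrier_mat (N ^ k) 1"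
    using crs_carrier[of N 0] by (metis add_0 power_0)
  have "(crs N 0 (rev il) * anns N 0 (rev js)) $$ (a, b) = (\<Sum>y<1. crs N 0 (rev il) $$ (a, y) * cnj (crs N 0 (rev js) $$ (b, y)))"
    unfolding anns_eq using Cd[OF ri(2)] Cd[OF rj(2)] a b by (subst mult_entry) (auto simp: adjoint_entry)
  also have "\<dots> = cf 0 k * symP N k $$ (a, enc N (rev il)) * cnj (cf 0 k * symP N k $$ (b, enc N (rev js)))"
    using F[OF ri a] F[OF rj b] by simp
  also have "symP N k $$ (a, enc N (rev il)) = symP N k $$ (a, enc N il)"
    using symP_mset_right[OF a ei(2) ei(1)] dg_enc[OF ri(1)] dg_enc[OF li(2)] ri(2) li(1) by simp
  also have "symP N k $$ (b, enc N (rev js)) = symP N k $$ (b, enc N js)"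
    using symP_mset_right[OF b ej(2) ej(1)] dg_enc[OF rj(1)] dg_enc[OF lj(2)] rj(2) lj(1) by simp
  also have "symP N k $$ (b, enc N js) = symP N k $$ (enc N js, b)" using symP_sym[OF b ej(1)] .
  finally have eq: "(crs N 0 (rev il) * anns N 0 (rev js)) $$ (a, b) =
      cf 0 k * symP N k $$ (a, enc N il) * cnj (cf 0 k * symP N k $$ (enc N js, b))" .
  have cj: "cnj (symP N k $$ (enc N js, b)) = symP N k $$ (enc N js, b)"
    using ej(1) b by (simp add: symP_entry)
  have cc: "cf 0 k * cnj (cf 0 k) = of_nat (fact k)"
    by (simp add: cf_def flip: of_real_mult)
  have "cf 0 k * symP N k $$ (a, enc N il) * cnj (cf 0 k * symP N k $$ (enc N js, b))
      = (cf 0 k * cnj (cf 0 k)) * symP N k $$ (a, enc N il) * cnj (symP N k $$ (enc N js, b))"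
    by (simp add: mult_ac)
  then show ?thesis using eq cj cc by simp
qed



lemma Qm_entry:
  "e < N ^ (M + k) \<Longrightarrow> x < N ^ k \<Longrightarrow>
   Qm N M k \<psi> $$ (e, x) = cf M k * (\<Sum>z<N ^ M. symP N (M + k) $$ (e, x * N ^ M + z) * \<psi> $ z)"
  by (simp add: Qm_def)

lemma Qm_P:
  assumes N: "0 < N"
  shows "Qm N M k \<psi> * symP N k = Qm N M k \<psi>"
proof (rule eq_matI)
  fix e x assume "e < dim_row (Qm N M k \<psi>)" "x < dim_col (Qm N M k \<psi>)"
  then have e: "e < N ^ (M + k)" and x: "x < N ^ k" by (simp_all add: Qm_def)
  have "(Qm N M k \<psi> * symP N k) $$ (e, x) = (\<Sum>y<N ^ k. Qm N M k \<psi> $$ (e, y) * symP N k $$ (y, x))"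
    using e x by (subst mult_entry) (auto simp: Qm_def)
  also have "\<dots> = (\<Sum>y<N ^ k. \<Sum>z<N ^ M. cf M k * \<psi> $ z * (symP N (M + k) $$ (e, y * N ^ M + z) * symP N k $$ (y, x)))"
    using e by (intro sum.cong refl) (simp add: Qm_entry sum_distrib_left sum_distrib_right mult_ac)
  also have "\<dots> = (\<Sum>z<N ^ M. \<Sum>y<N ^ k. cf M k * \<psi> $ z * (symP N (M + k) $$ (e, y * N ^ M + z) * symP N k $$ (y, x)))"
    by (rule sum.swap)
  also have "\<dots> = (\<Sum>z<N ^ M. cf M k * \<psi> $ z * symP N (M + k) $$ (e, x * N ^ M + z))"
  proof (rule sum.cong[OF refl])
    fix z assume z: "z \<in> {..<N ^ M}"
    have "(\<Sum>y<N ^ k. symP N (M + k) $$ (e, y * N ^ M + z) * symP N k $$ (y, x)) = symP N (M + k) $$ (e, x * N ^ M + z)"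
      using absR_suf[OF N e _ x, of z] z by simp
    then show "(\<Sum>y<N ^ k. cf M k * \<psi> $ z * (symP N (M + k) $$ (e, y * N ^ M + z) * symP N k $$ (y, x)))
        = cf M k * \<psi> $ z * symP N (M + k) $$ (e, x * N ^ M + z)"
      by (simp add: sum_distrib_left[symmetric])
  qed
  also have "\<dots> = Qm N M k \<psi> $$ (e, x)"
    using e x by (simp add: Qm_entry sum_distrib_left mult_ac)
  finally show "(Qm N M k \<psi> * symP N k) $$ (e, x) = Qm N M k \<psi> $$ (e, x)" .
qed (auto simp: Qm_def)

lemma P_Qm:
  assumes N: "0 < N"
  shows "symP N (M + k) * Qm N M k \<psi> = Qm N M k \<psi>"
proof (rule eq_matI)
  fix e x assume "e < dim_row (Qm N M k \<psi>)" "x < dim_col (Qm N M k \<psi>)"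
  then have e: "e < N ^ (M + k)" and x: "x < N ^ k" by (simp_all add: Qm_def)
  have "(symP N (M + k) * Qm N M k \<psi>) $$ (e, x) = (\<Sum>y<N ^ (M + k). symP N (M + k) $$ (e, y) * Qm N M k \<psi> $$ (y, x))"
    using e x by (subst mult_entry) (auto simp: Qm_def)
  also have "\<dots> = (\<Sum>y<N ^ (M + k). \<Sum>z<N ^ M. cf M k * \<psi> $ z * (symP N (M + k) $$ (e, y) * symP N (M + k) $$ (y, x * N ^ M + z)))"
    using x by (intro sum.cong refl) (simp add: Qm_entry sum_distrib_left sum_distrib_right mult_ac)
  also have "\<dots> = (\<Sum>z<N ^ M. \<Sum>y<N ^ (M + k). cf M k * \<psi> $ z * (symP N (M + k) $$ (e, y) * symP N (M + k) $$ (y, x * N ^ M + z)))"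
    by (rule sum.swap)
  also have "\<dots> = (\<Sum>z<N ^ M. cf M k * \<psi> $ z * symP N (M + k) $$ (e, x * N ^ M + z))"
  proof (rule sum.cong[OF refl])
    fix z assume z: "z \<in> {..<N ^ M}"
    have lt: "x * N ^ M + z < N ^ (M + k)" using suf_lt[OF x, of z M] z by simp
    have "(\<Sum>y<N ^ (M + k). symP N (M + k) $$ (e, y) * symP N (M + k) $$ (y, x * N ^ M + z)) = symP N (M + k) $$ (e, x * N ^ M + z)"
      by (rule idem_entry[OF N e lt])
    then show "(\<Sum>y<N ^ (M + k). cf M k * \<psi> $ z * (symP N (M + k) $$ (e, y) * symP N (M + k) $$ (y, x * N ^ M + z)))
        = cf M k * \<psi> $ z * symP N (M + k) $$ (e, x * N ^ M + z)"
      by (simp add: sum_distrib_left[symmetric])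
  qed
  also have "\<dots> = Qm N M k \<psi> $$ (e, x)"
    using e x by (simp add: Qm_entry sum_distrib_left mult_ac)
  finally show "(symP N (M + k) * Qm N M k \<psi>) $$ (e, x) = Qm N M k \<psi> $$ (e, x)" .
qed (auto simp: Qm_def)


lemma G_entry:
  assumes "x < N ^ k" "y < N ^ k"
  shows "(mat_adjoint (Qm N M k \<psi>) * Qm N M k \<psi>) $$ (x, y) = (\<Sum>e<N ^ (M + k). cnj (Qm N M k \<psi> $$ (e, x)) * Qm N M k \<psi> $$ (e, y))"
  using assms by (subst mult_entry) (auto simp: adjoint_entry Qm_def)

lemma PGP:
  assumes N: "0 < N"
  shows "symP N k * (mat_adjoint (Qm N M k \<psi>) * Qm N M k \<psi>) * symP N k = mat_adjoint (Qm N M k \<psi>) * Qm N M k \<psi>"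
proof -
  let ?Q = "Qm N M k \<psi>" and ?P = "symP N k"
  have Q: "?Q \<in> carrier_mat (N ^ (M + k)) (N ^ k)" by simp
  have P: "?P \<in> carrier_mat (N ^ k) (N ^ k)" by simp
  have QH: "mat_adjoint ?Q \<in> carrier_mat (N ^ k) (N ^ (M + k))" by simp
  have PQH: "?P * mat_adjoint ?Q = mat_adjoint ?Q"
    using adjoint_mult[OF Q P] Qm_P[OF N] symP_adjoint by metis
  have "?P * (mat_adjoint ?Q * ?Q) = (?P * mat_adjoint ?Q) * ?Q" by (rule assoc_mult_mat[OF P QH Q, symmetric])
  also have "\<dots> = mat_adjoint ?Q * ?Q" using PQH by simp
  finally have 1: "?P * (mat_adjoint ?Q * ?Q) = mat_adjoint ?Q * ?Q" .
  have "(mat_adjoint ?Q * ?Q) * ?P = mat_adjoint ?Q * (?Q * ?P)" by (rule assoc_mult_mat[OF QH Q P])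
  also have "\<dots> = mat_adjoint ?Q * ?Q" using Qm_P[OF N] by simp
  finally show ?thesis using 1 by simp
qed

lemma opW_eq:
  assumes N: "0 < N" and psi: "\<psi> \<in> carrier_vec (N ^ M)" and Ppsi: "symP N M *\<^sub>v \<psi> = \<psi>"
  shows "opW N M k (ketbra \<psi>) = mat_adjoint (Qm N M k \<psi>) * Qm N M k \<psi>"
proof -
  let ?Q = "Qm N M k \<psi>" and ?P = "symP N k"
  let ?G = "mat_adjoint ?Q * ?Q"
  let ?L = "idx_lists N k"
  have "opW N M k (ketbra \<psi>) = ?P * ?G * ?P"
  proof (rule eq_matI)
    fix a b assume "a < dim_row (?P * ?G * ?P)" "b < dim_col (?P * ?G * ?P)"
    then have a: "a < N ^ k" and b: "b < N ^ k" by auto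
    have "opW N M k (ketbra \<psi>) $$ (a, b) = (1 / of_nat (fact k)) *
      (\<Sum>il\<in>?L. \<Sum>jl\<in>?L. traceH N M (ketbra \<psi> * anns N M il * crs N M jl) *
        (crs N 0 (rev il) * anns N 0 (rev jl)) $$ (a, b))"
      using a b by (simp add: opW_def)
    also have "\<dots> = (1 / of_nat (fact k)) *
      (\<Sum>il\<in>?L. \<Sum>jl\<in>?L. ?G $$ (enc N il, enc N jl) * (of_nat (fact k) * ?P $$ (a, enc N il) * ?P $$ (enc N jl, b)))"
    proof (rule arg_cong2[where f = "(*)"], rule refl, rule sum.cong[OF refl], rule sum.cong[OF refl])
      fix il jl assume il: "il \<in> ?L" and jl: "jl \<in> ?L"
      have ei: "enc N il < N ^ k" using enc_lt[of il N] il by (auto simp: idx_lists_def)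
      have ej: "enc N jl < N ^ k" using enc_lt[of jl N] jl by (auto simp: idx_lists_def)
      show "traceH N M (ketbra \<psi> * anns N M il * crs N M jl) * (crs N 0 (rev il) * anns N 0 (rev jl)) $$ (a, b)
          = ?G $$ (enc N il, enc N jl) * (of_nat (fact k) * ?P $$ (a, enc N il) * ?P $$ (enc N jl, b))"
        using trace_term[OF N psi Ppsi il jl] op0_entry[OF N il jl a b] G_entry[OF ei ej] by simp
    qed
    also have "\<dots> = (\<Sum>il\<in>?L. \<Sum>jl\<in>?L. ?P $$ (a, enc N il) * ?G $$ (enc N il, enc N jl) * ?P $$ (enc N jl, b))"
      by (simp add: sum_distrib_left mult_ac)
    also have "\<dots> = (\<Sum>x<N ^ k. \<Sum>y<N ^ k. ?P $$ (a, x) * ?G $$ (x, y) * ?P $$ (y, b))"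
    proof -
      have "(\<Sum>jl\<in>?L. ?P $$ (a, enc N il) * ?G $$ (enc N il, enc N jl) * ?P $$ (enc N jl, b))
          = (\<Sum>y<N ^ k. ?P $$ (a, enc N il) * ?G $$ (enc N il, y) * ?P $$ (y, b))" for il
        using sum_idx_lists[OF N, of "\<lambda>y. ?P $$ (a, enc N il) * ?G $$ (enc N il, y) * ?P $$ (y, b)" k] by simp
      then have "(\<Sum>il\<in>?L. \<Sum>jl\<in>?L. ?P $$ (a, enc N il) * ?G $$ (enc N il, enc N jl) * ?P $$ (enc N jl, b))
          = (\<Sum>il\<in>?L. \<Sum>y<N ^ k. ?P $$ (a, enc N il) * ?G $$ (enc N il, y) * ?P $$ (y, b))" by simp
      also have "\<dots> = (\<Sum>x<N ^ k. \<Sum>y<N ^ k. ?P $$ (a, x) * ?G $$ (x, y) * ?P $$ (y, b))"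
        using sum_idx_lists[OF N, of "\<lambda>x. \<Sum>y<N ^ k. ?P $$ (a, x) * ?G $$ (x, y) * ?P $$ (y, b)" k] by simp
      finally show ?thesis .
    qed
    also have "\<dots> = (\<Sum>y<N ^ k. \<Sum>x<N ^ k. ?P $$ (a, x) * ?G $$ (x, y) * ?P $$ (y, b))"
      by (rule sum.swap)
    also have "\<dots> = (?P * ?G * ?P) $$ (a, b)"
    proof -
      have "\<And>y. y < N ^ k \<Longrightarrow> (?P * ?G) $$ (a, y) = (\<Sum>x<N ^ k. ?P $$ (a, x) * ?G $$ (x, y))"
        using a by (subst mult_entry) (auto simp: Qm_def)
      moreover have "(?P * ?G * ?P) $$ (a, b) = (\<Sum>y<N ^ k. (?P * ?G) $$ (a, y) * ?P $$ (y, b))"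
        using a b by (subst mult_entry) (auto simp: Qm_def)
      ultimately show ?thesis by (simp add: sum_distrib_right)
    qed
    finally show "opW N M k (ketbra \<psi>) $$ (a, b) = (?P * ?G * ?P) $$ (a, b)" .
  qed (auto simp: opW_def)
  then show ?thesis using PGP[OF N] by simp
qed


lemma kr_entry:
  assumes psi: "\<psi> \<in> carrier_vec (N ^ M)" and x: "x < N ^ k" and x': "x' < N ^ k"
    and z: "z < N ^ M" and w: "w < N ^ M"
  shows "kron (1\<^sub>m (N ^ k)) (ketbra \<psi>) $$ (x * N ^ M + z, x' * N ^ M + w) = (if x = x' then \<psi> $ z * cnj (\<psi> $ w) else 0)"
proof -
  have dv: "dim_vec \<psi> = N ^ M" using psi carrier_vecD by blast
  have pos: "0 < N ^ M" using z by linarith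
  have i1: "x * N ^ M + z < N ^ k * N ^ M" by (rule mult_add_lt[OF x z])
  have i2: "x' * N ^ M + w < N ^ k * N ^ M" by (rule mult_add_lt[OF x' w])
  have d1: "(x * N ^ M + z) div N ^ M = x" "(x * N ^ M + z) mod N ^ M = z" using z pos by simp_all
  have d2: "(x' * N ^ M + w) div N ^ M = x'" "(x' * N ^ M + w) mod N ^ M = w" using w pos by simp_all
  show ?thesis using i1 i2 d1 d2 x x' z w by (simp add: kron_def ketbra_def dv)
qed

lemma opT_eq:
  assumes N: "0 < N" and psi: "\<psi> \<in> carrier_vec (N ^ M)"
  shows "opT N M k (ketbra \<psi>) = Qm N M k \<psi> * mat_adjoint (Qm N M k \<psi>)"
proof (rule eq_matI)
  let ?Q = "Qm N M k \<psi>" and ?P = "symP N (M + k)" and ?m = "N ^ M" and ?n = "N ^ k"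
  let ?Kr = "kron (1\<^sub>m (N ^ k)) (ketbra \<psi>)"
  have dv: "dim_vec \<psi> = N ^ M" using psi carrier_vecD by blast
  have Krd: "dim_row ?Kr = ?n * ?m" "dim_col ?Kr = ?n * ?m" by (simp_all add: kron_def ketbra_def dv)
  have pw: "N ^ (M + k) = ?n * ?m" by (simp add: power_add mult.commute)
  fix a b assume "a < dim_row (?Q * mat_adjoint ?Q)" "b < dim_col (?Q * mat_adjoint ?Q)"
  then have a: "a < N ^ (M + k)" and b: "b < N ^ (M + k)" by (simp_all add: Qm_def)
  define A where "A x = (\<Sum>z<?m. ?P $$ (a, x * ?m + z) * \<psi> $ z)" for x
  have PK: "(?P * ?Kr) $$ (a, x' * ?m + w) = A x' * cnj (\<psi> $ w)" if x': "x' < ?n" and w: "w < ?m" for x' w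
  proof -
    have lt: "x' * ?m + w < ?n * ?m" by (rule mult_add_lt[OF x' w])
    have "(?P * ?Kr) $$ (a, x' * ?m + w) = (\<Sum>y<?n * ?m. ?P $$ (a, y) * ?Kr $$ (y, x' * ?m + w))"
      using a lt Krd pw by (subst mult_entry) auto
    also have "\<dots> = (\<Sum>x<?n. \<Sum>z<?m. ?P $$ (a, x * ?m + z) * ?Kr $$ (x * ?m + z, x' * ?m + w))"
      by (rule sum_mult_split)
    also have "\<dots> = (\<Sum>x<?n. \<Sum>z<?m. if x = x' then ?P $$ (a, x * ?m + z) * (\<psi> $ z * cnj (\<psi> $ w)) else 0)"
      using x' w kr_entry[OF psi _ x' _ w] by (intro sum.cong refl) auto
    also have "\<dots> = (\<Sum>x<?n. if x = x' then (\<Sum>z<?m. ?P $$ (a, x * ?m + z) * (\<psi> $ z * cnj (\<psi> $ w))) else 0)"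
      by (rule sum.cong[OF refl]) simp
    also have "\<dots> = (\<Sum>z<?m. ?P $$ (a, x' * ?m + z) * (\<psi> $ z * cnj (\<psi> $ w)))"
      using x' by simp
    also have "\<dots> = (\<Sum>z<?m. ?P $$ (a, x' * ?m + z) * \<psi> $ z) * cnj (\<psi> $ w)"
      unfolding sum_distrib_right by (rule sum.cong[OF refl]) (simp add: mult_ac)
    also have "\<dots> = A x' * cnj (\<psi> $ w)" by (simp add: A_def)
    finally show ?thesis .
  qed
  have "opT N M k (ketbra \<psi>) $$ (a, b) = (of_nat (fact (M + k)) / of_nat (fact M)) * ((?P * ?Kr * ?P) $$ (a, b))"
    using a b by (simp add: opT_def)
  also have "(?P * ?Kr * ?P) $$ (a, b) = (\<Sum>u<?n * ?m. (?P * ?Kr) $$ (a, u) * ?P $$ (u, b))"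
    using a b Krd pw by (subst mult_entry) auto
  also have "\<dots> = (\<Sum>x<?n. \<Sum>w<?m. (?P * ?Kr) $$ (a, x * ?m + w) * ?P $$ (x * ?m + w, b))"
    by (rule sum_mult_split)
  also have "\<dots> = (\<Sum>x<?n. \<Sum>w<?m. A x * cnj (\<psi> $ w) * ?P $$ (x * ?m + w, b))"
    using PK by (intro sum.cong refl) auto
  finally have T: "opT N M k (ketbra \<psi>) $$ (a, b) = (of_nat (fact (M + k)) / of_nat (fact M)) * (\<Sum>x<?n. \<Sum>w<?m. A x * cnj (\<psi> $ w) * ?P $$ (x * ?m + w, b))" .
  have "(?Q * mat_adjoint ?Q) $$ (a, b) = (\<Sum>x<?n. ?Q $$ (a, x) * cnj (?Q $$ (b, x)))"
    using a b by (subst mult_entry) (auto simp: adjoint_entry Qm_def)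
  also have "\<dots> = (\<Sum>x<?n. (cf M k * cnj (cf M k)) * (A x * (\<Sum>w<?m. cnj (\<psi> $ w) * ?P $$ (x * ?m + w, b))))"
  proof (rule sum.cong[OF refl])
    fix x assume x: "x \<in> {..<?n}"
    have "cnj (\<Sum>w<?m. ?P $$ (b, x * ?m + w) * \<psi> $ w) = (\<Sum>w<?m. cnj (\<psi> $ w) * ?P $$ (x * ?m + w, b))"
    proof -
      have "\<And>w. w < ?m \<Longrightarrow> cnj (?P $$ (b, x * ?m + w)) = ?P $$ (x * ?m + w, b)"
      proof -
        fix w assume w: "w < ?m"
        have lt: "x * ?m + w < N ^ (M + k)" using suf_lt[of x N k w M] x w by simp
        show "cnj (?P $$ (b, x * ?m + w)) = ?P $$ (x * ?m + w, b)"
          using lt b by (simp add: symP_entry symP_sym[OF b lt])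
      qed
      then show ?thesis by (simp add: mult.commute)
    qed
    then show "?Q $$ (a, x) * cnj (?Q $$ (b, x)) = (cf M k * cnj (cf M k)) * (A x * (\<Sum>w<?m. cnj (\<psi> $ w) * ?P $$ (x * ?m + w, b)))"
      using a b x by (simp add: Qm_entry A_def mult_ac)
  qed
  also have "cf M k * cnj (cf M k) = of_nat (fact (M + k)) / of_nat (fact M)"
    by (simp add: cf_def flip: of_real_mult)
  finally show "opT N M k (ketbra \<psi>) $$ (a, b) = (?Q * mat_adjoint ?Q) $$ (a, b)"
    unfolding T by (simp add: sum_distrib_left sum_distrib_right mult_ac)
next
  show "dim_row (opT N M k (ketbra \<psi>)) = dim_row (Qm N M k \<psi> * mat_adjoint (Qm N M k \<psi>))"
    by (simp add: opT_def Qm_def)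
  show "dim_col (opT N M k (ketbra \<psi>)) = dim_col (Qm N M k \<psi> * mat_adjoint (Qm N M k \<psi>))"
    by (simp add: opT_def Qm_def)
qed



lemma char_poly_zero: "char_poly (0\<^sub>m m m :: complex mat) = [:0, 1:] ^ m"
proof -
  have Z: "(0\<^sub>m m m :: complex mat) \<in> carrier_mat m m" by simp
  have ut: "upper_triangular (0\<^sub>m m m :: complex mat)" by (simp add: upper_triangular_def)
  have "char_poly (0\<^sub>m m m :: complex mat) = (\<Prod>a\<leftarrow>diag_mat (0\<^sub>m m m). [:- a, 1:])"
    by (rule char_poly_upper_triangular[OF Z ut])
  also have "diag_mat (0\<^sub>m m m :: complex mat) = replicate m 0"
    by (rule nth_equalityI) (auto simp: diag_mat_def)
  finally show ?thesis by (simp add: prod_list_replicate)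
qed

lemma sylvester_char_poly:
  fixes A B :: "complex mat"
  assumes A: "A \<in> carrier_mat n m" and B: "B \<in> carrier_mat m n"
  shows "char_poly (A * B) * [:0, 1:] ^ m = char_poly (B * A) * [:0, 1:] ^ n"
proof -
  have AB: "A * B \<in> carrier_mat n n" using A B by simp
  have BA: "B * A \<in> carrier_mat m m" using A B by simp
  let ?L = "four_block_mat (A * B) (0\<^sub>m n m) B (0\<^sub>m m m)"
  let ?R = "four_block_mat (0\<^sub>m n n) (0\<^sub>m n m) B (B * A)"
  let ?S = "four_block_mat (1\<^sub>m n) A (0\<^sub>m m n) (1\<^sub>m m)"
  let ?T = "four_block_mat (1\<^sub>m n) (- A) (0\<^sub>m m n) (1\<^sub>m m)"
  have L: "?L \<in> carrier_mat (n + m) (n + m)" using AB B by (intro four_block_carrier_mat) auto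
  have R: "?R \<in> carrier_mat (n + m) (n + m)" using BA B by (intro four_block_carrier_mat) auto
  have S: "?S \<in> carrier_mat (n + m) (n + m)" by (intro four_block_carrier_mat) auto
  have T: "?T \<in> carrier_mat (n + m) (n + m)" by (intro four_block_carrier_mat) auto
  have Ainv: "A + - A = 0\<^sub>m n m" using A by (intro eq_matI) auto
  have Z: "- (0\<^sub>m m m :: complex mat) = 0\<^sub>m m m" by (intro eq_matI) auto
  have ST: "?S * ?T = 1\<^sub>m (n + m)"
    using A Ainv Z by (subst mult_four_block_mat[of _ n n _ m _ m], auto)
  have TS: "?T * ?S = 1\<^sub>m (n + m)"
    using A Ainv by (subst mult_four_block_mat[of _ n n _ m _ m], auto)
  have LS: "?L * ?S = four_block_mat (A * B) (A * B * A) B (B * A)"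
    using A B by (subst mult_four_block_mat[of _ n n _ m _ m], auto)
  have SR: "?S * ?R = four_block_mat (A * B) (A * B * A) B (B * A)"
    using A B by (subst mult_four_block_mat[of _ n n _ m _ m], auto simp: assoc_mult_mat[OF A B A])
  have LSRT: "?L = ?S * ?R * ?T"
  proof -
    have "?L = ?L * (?S * ?T)" unfolding ST using right_mult_one_mat[OF L] by simp
    also have "\<dots> = (?L * ?S) * ?T" using assoc_mult_mat[OF L S T] by simp
    also have "\<dots> = (?S * ?R) * ?T" using LS SR by simp
    finally show ?thesis .
  qed
  have sub: "{?L, ?R, ?S, ?T} \<subseteq> carrier_mat (n + m) (n + m)" using L R S T by blast
  have "similar_mat_wit ?L ?R ?S ?T"
    unfolding similar_mat_wit_def Let_def carrier_matD(1)[OF L] using sub ST TS LSRT by blast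
  then have "similar_mat ?L ?R" unfolding similar_mat_def by blast
  then have eq: "char_poly ?L = char_poly ?R" by (rule char_poly_similar)
  have "char_poly ?L = char_poly (A * B) * char_poly (0\<^sub>m m m :: complex mat)"
    by (rule char_poly_0_block'[OF refl _ _ AB B], insert char_poly_factorized[OF AB] char_poly_factorized[of "0\<^sub>m m m" m], auto)
  moreover have "char_poly ?R = char_poly (0\<^sub>m n n :: complex mat) * char_poly (B * A)"
    by (rule char_poly_0_block'[OF refl _ _ _ B BA], insert char_poly_factorized[OF BA] char_poly_factorized[of "0\<^sub>m n n" n], auto)
  ultimately show ?thesis using eq by (simp add: char_poly_zero mult.commute)
qed


lemma eig_mult_AB_BA:
  fixes A B :: "complex mat"
  assumes A: "A \<in> carrier_mat n m" and B: "B \<in> carrier_mat m n" and c: "c \<noteq> 0"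
  shows "eig_mult (A * B) c = eig_mult (B * A) c"
proof -
  have AB: "A * B \<in> carrier_mat n n" using A B by simp
  have BA: "B * A \<in> carrier_mat m m" using A B by simp
  have nz1: "char_poly (A * B) \<noteq> 0" using degree_monic_char_poly[OF AB] by auto
  have nz2: "char_poly (B * A) \<noteq> 0" using degree_monic_char_poly[OF BA] by auto
  have xo: "order c ([:0, 1:] ^ j) = 0" for j :: nat
    by (rule order_0I) (use c in simp)
  have xnz: "([:0, 1:] :: complex poly) ^ j \<noteq> 0" for j :: nat by simp
  have "order c (char_poly (A * B) * [:0, 1:] ^ m) = order c (char_poly (B * A) * [:0, 1:] ^ n)"
    using sylvester_char_poly[OF A B] by simp
  then show ?thesis unfolding eig_mult_def
    using order_mult[of "char_poly (A * B)" "[:0, 1:] ^ m" c] order_mult[of "char_poly (B * A)" "[:0, 1:] ^ n" c]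
      nz1 nz2 xnz xo by simp
qed

theorem mainTheorem4:
  fixes N M k :: nat and \<psi> :: "complex vec"
  assumes "N \<ge> 2" and "M \<ge> 1"
    and "\<psi> \<in> carrier_vec (N ^ M)" and "symP N M *\<^sub>v \<psi> = \<psi>"
  shows "\<forall>c::complex. c \<noteq> 0 \<longrightarrow>
           eig_mult (restrictH N (M + k) (opT N M k (ketbra \<psi>))) c
         = eig_mult (restrictH N k (opW N M k (ketbra \<psi>))) c"
proof (intro allI impI)
  fix c :: complex assume c: "c \<noteq> 0"
  have N: "0 < N" using assms(1) by simp
  note psi = assms(3) and Ppsi = assms(4)
  let ?Q = "Qm N M k \<psi>"
  let ?S1 = "symBasis N (M + k)" and ?S2 = "symBasis N k"
  let ?d1 = "length (sym_reps N (M + k))" and ?d2 = "length (sym_reps N k)"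
  have Q: "?Q \<in> carrier_mat (N ^ (M + k)) (N ^ k)" by simp
  have QH: "mat_adjoint ?Q \<in> carrier_mat (N ^ k) (N ^ (M + k))" by simp
  have S1: "?S1 \<in> carrier_mat (N ^ (M + k)) ?d1" by (rule carrier_matI) simp_all
  have S2: "?S2 \<in> carrier_mat (N ^ k) ?d2" by (rule carrier_matI) simp_all
  have S1H: "mat_adjoint ?S1 \<in> carrier_mat ?d1 (N ^ (M + k))" using S1 by simp
  have S2H: "mat_adjoint ?S2 \<in> carrier_mat ?d2 (N ^ k)" using S2 by simp
  have P1: "?S1 * mat_adjoint ?S1 = symP N (M + k)" by (rule symBasis_proj[OF N])
  have P2: "?S2 * mat_adjoint ?S2 = symP N k" by (rule symBasis_proj[OF N])
  define X where "X = mat_adjoint ?S1 * ?Q * ?S2"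
  have X: "X \<in> carrier_mat ?d1 ?d2" unfolding X_def by (rule mult_carrier_mat[OF mult_carrier_mat[OF S1H Q] S2])
  have XH: "mat_adjoint X = mat_adjoint ?S2 * mat_adjoint ?Q * ?S1"
    unfolding X_def using adjoint_mult[OF mult_carrier_mat[OF S1H Q] S2] adjoint_mult[OF S1H Q]
    by (simp add: assoc_mult_mat[OF S2H QH S1])
  have XHc: "mat_adjoint X \<in> carrier_mat ?d2 ?d1" using X by simp
  have g6: "((A * B) * C) * ((D * E) * F) = A * (B * ((C * D) * (E * F)))"
    if "A \<in> carrier_mat n1 n2" "B \<in> carrier_mat n2 n3" "C \<in> carrier_mat n3 n4"
      "D \<in> carrier_mat n4 n5" "E \<in> carrier_mat n5 n6" "F \<in> carrier_mat n6 n7"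
    for A B C D E F :: "complex mat" and n1 n2 n3 n4 n5 n6 n7
  proof -
    have "((A * B) * C) * ((D * E) * F) = (A * (B * C)) * (D * (E * F))"
      using assoc_mult_mat[OF that(1,2,3)] assoc_mult_mat[OF that(4,5,6)] by simp
    also have "\<dots> = A * ((B * C) * (D * (E * F)))"
      by (rule assoc_mult_mat) (use that in auto)
    also have "(B * C) * (D * (E * F)) = B * (C * (D * (E * F)))"
      by (rule assoc_mult_mat) (use that in auto)
    also have "C * (D * (E * F)) = (C * D) * (E * F)"
      by (rule assoc_mult_mat[symmetric]) (use that in auto)
    finally show ?thesis .
  qed
  have RT: "restrictH N (M + k) (opT N M k (ketbra \<psi>)) = X * mat_adjoint X"
  proof -
    have "X * mat_adjoint X = mat_adjoint ?S1 * (?Q * ((?S2 * mat_adjoint ?S2) * (mat_adjoint ?Q * ?S1)))"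
      unfolding XH unfolding X_def by (rule g6[OF S1H Q S2 S2H QH S1])
    also have "?Q * ((?S2 * mat_adjoint ?S2) * (mat_adjoint ?Q * ?S1)) = (?Q * symP N k) * (mat_adjoint ?Q * ?S1)"
      unfolding P2 by (rule assoc_mult_mat[symmetric, OF Q symP_carrier mult_carrier_mat[OF QH S1]])
    also have "\<dots> = (?Q * mat_adjoint ?Q) * ?S1"
      unfolding Qm_P[OF N] by (rule assoc_mult_mat[symmetric, OF Q QH S1])
    also have "mat_adjoint ?S1 * ((?Q * mat_adjoint ?Q) * ?S1) = mat_adjoint ?S1 * (?Q * mat_adjoint ?Q) * ?S1"
      by (rule assoc_mult_mat[symmetric, OF S1H mult_carrier_mat[OF Q QH] S1])
    finally show ?thesis unfolding restrictH_def opT_eq[OF N psi] by simp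
  qed
  have RW: "restrictH N k (opW N M k (ketbra \<psi>)) = mat_adjoint X * X"
  proof -
    have "mat_adjoint X * X = mat_adjoint ?S2 * (mat_adjoint ?Q * ((?S1 * mat_adjoint ?S1) * (?Q * ?S2)))"
      unfolding XH unfolding X_def by (rule g6[OF S2H QH S1 S1H Q S2])
    also have "(?S1 * mat_adjoint ?S1) * (?Q * ?S2) = (symP N (M + k) * ?Q) * ?S2"
      unfolding P1 by (rule assoc_mult_mat[symmetric, OF symP_carrier Q S2])
    also have "mat_adjoint ?Q * ((symP N (M + k) * ?Q) * ?S2) = (mat_adjoint ?Q * ?Q) * ?S2"
      unfolding P_Qm[OF N] by (rule assoc_mult_mat[symmetric, OF QH Q S2])
    also have "mat_adjoint ?S2 * ((mat_adjoint ?Q * ?Q) * ?S2) = mat_adjoint ?S2 * (mat_adjoint ?Q * ?Q) * ?S2"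
      by (rule assoc_mult_mat[symmetric, OF S2H mult_carrier_mat[OF QH Q] S2])
    finally show ?thesis unfolding restrictH_def opW_eq[OF N psi Ppsi] by simp
  qed
  show "eig_mult (restrictH N (M + k) (opT N M k (ketbra \<psi>))) c = eig_mult (restrictH N k (opW N M k (ketbra \<psi>))) c"
    unfolding RT RW by (rule eig_mult_AB_BA[OF X XHc c])
qed


end
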